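(* For every integer $n$ there is an isomorphism of $\mathcal{A}(\mathbb{CP}^1_q)$-bimodules $$\Phi_{(n)}:\ \mathcal{L}_n\otimes_{\mathcal{A}(\mathbb{CP}^1_q)}\Omega^{(0,1)}(\mathbb{CP}^1_q)\ \xrightarrow{\ \sim\ }\ \Omega^{(0,1)}(\mathbb{CP}^1_q)\otimes_{\mathcal{A}(\mathbb{CP}^1_q)}\mathcal{L}_n,$$ and likewise an isomorphism of $\mathcal{A}(\mathbb{CP}^1_q)$-bimodules $\mathcal{L}_n\otimes_{\mathcal{A}(\mathbb{CP}^1_q)}\Omega^{(1,0)}(\mathbb{CP}^1_q)\simeq\Omega^{(1,0)}(\mathbb{CP}^1_q)\otimes_{\mathcal{A}(\mathbb{CP}^1_q)}\mathcal{L}_n$.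
   Context: Fix $0<q<1$. Let $\mathcal{A}(SU_q(2))$ be the unital complex $*$-algebra generated by $a,c$ subject to $ac=qca$, $ac^*=qc^*a$, $cc^*=c^*c$, $a^*a+c^*c=aa^*+q^2cc^*=1$. Let $K$ be the algebra automorphism... more precisely, $U_q(su(2))$ (generated by $K^{\pm1},E,F$ with $KE=qEK$, $KF=q^{-1}FK$, $EF-FE=(K^2-K^{-2})/(q-q^{-1})$, $\Delta K=K\otimes K$) acts on $\mathcal{A}(SU_q(2))$ making it a left module algebra, with $K\triangleright a=q^{-1/2}a$, $K\triangleright c=q^{-1/2}c$, $K\triangleright a^*=q^{1/2}a^*$, $K\triangleright c^*=q^{1/2}c^*$ (so $K$ acts by an algebra automorphism). For $n\in\mathbb{Z}$ let $\mathcal{L}_n=\{x\in\mathcal{A}(SU_q(2)):K\triangleright x=q^{n/2}x\}$ and $\mathcal{A}(\mathbb{CP}^1_q):=\mathcal{L}_0$; each $\mathcal{L}_n$ is an $\mathcal{A}(\mathbb{CP}^1_q)$-bimodule. Let $\Omega^1(SU_q(2))$ be the $\mathcal{A}(SU_q(2))$-bimodule which is free as a left module with basis $\omega_+,\omega_-,\omega_z$, with right multiplication determined by $\omega_\pm x=q^kx\omega_\pm$ and $\omega_zx=q^{2k}x\omega_z$ for $x\in\mathcal{L}_k$. Define the $\mathcal{A}(\mathbb{CP}^1_q)$-sub-bimodules $\Omega^{(0,1)}(\mathbb{CP}^1_q):=\mathcal{L}_{-2}\,\omega_-$ and $\Omega^{(1,0)}(\mathbb{CP}^1_q):=\mathcal{L}_{2}\,\omega_+$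 of $\Omega^1(SU_q(2))$. *)

theory Defs
  imports "HOL-Analysis.Analysis" "HOL-Library.Poly_Mapping"
begin

datatype gen = Ga | Gas | Gc | Gcs

datatype word = Wd "gen list"

instantiation word :: monoid_add
begin
definition zero_word :: word where "zero_word = Wd []"
fun plus_word :: "word \<Rightarrow> word \<Rightarrow> word" where
  "plus_word (Wd u) (Wd v) = Wd (u @ v)"
instance
proof
  fix a b c :: word
  show "a + b + c = a + (b + c)" by (cases a; cases b; cases c) simp
  show "0 + a = a" by (cases a) (simp add: zero_word_def)
  show "a + 0 = a" by (cases a) (simp add: zero_word_def)
qed
end

text \<open>Free unital complex algebra: finitely supported functions on words,
  multiplication by concatenation of words (a ring_1).\<close>
type_synonym falg = "word \<Rightarrow>\<^sub>0 complex"

definition gn :: "gen \<Rightarrow> falg" where "gn g = Poly_Mapping.single (Wd [g]) 1"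
definition cst :: "complex \<Rightarrow> falg" where "cst c = Poly_Mapping.single 0 c"

definition suq_rels :: "real \<Rightarrow> falg set" where
  "suq_rels q =
    (let a = gn Ga; as = gn Gas; c = gn Gc; cs = gn Gcs; Q = cst (complex_of_real q) in
     { a * c - Q * c * a,
       a * cs - Q * cs * a,
       c * cs - cs * c,
       cs * as - Q * as * cs,
       c * as - Q * as * c,
       as * a + cs * c - 1,
       a * as + Q * Q * c * cs - 1 })"

inductive_set suq_ideal :: "real \<Rightarrow> falg set" for q :: real where
  rel: "r \<in> suq_rels q \<Longrightarrow> r \<in> suq_ideal q"
| zero: "0 \<in> suq_ideal q"
| add: "x \<in> suq_ideal q \<Longrightarrow> y \<in> suq_ideal q \<Longrightarrow> x + y \<in> suq_ideal q"
| mult: "x \<in> suq_ideal q \<Longrightarrow> u * x * v \<in> suq_ideal q"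

type_synonym aelt = "falg set"

definition cls :: "real \<Rightarrow> falg \<Rightarrow> aelt" where
  "cls q x = {y. y - x \<in> suq_ideal q}"

definition Asu :: "real \<Rightarrow> aelt set" where "Asu q = range (cls q)"

definition lift1 :: "real \<Rightarrow> (falg \<Rightarrow> falg) \<Rightarrow> aelt \<Rightarrow> aelt" where
  "lift1 q f X = (\<Union>x\<in>X. cls q (f x))"
definition lift2 :: "real \<Rightarrow> (falg \<Rightarrow> falg \<Rightarrow> falg) \<Rightarrow> aelt \<Rightarrow> aelt \<Rightarrow> aelt" where
  "lift2 q f X Y = (\<Union>x\<in>X. \<Union>y\<in>Y. cls q (f x y))"

definition addA :: "real \<Rightarrow> aelt \<Rightarrow> aelt \<Rightarrow> aelt" where "addA q = lift2 q (+)"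
definition mulA :: "real \<Rightarrow> aelt \<Rightarrow> aelt \<Rightarrow> aelt" where "mulA q = lift2 q (*)"
definition smulA :: "real \<Rightarrow> complex \<Rightarrow> aelt \<Rightarrow> aelt" where
  "smulA q c = lift1 q (\<lambda>x. cst c * x)"
definition zeroA :: "real \<Rightarrow> aelt" where "zeroA q = cls q 0"

text \<open>Weight of a word: K acts on a, c by q^(-1/2) and on a^*, c^* by q^(1/2);
  K is an algebra automorphism, so it acts on a word of weight d by q^(d/2).\<close>
fun gwt :: "gen \<Rightarrow> int" where
  "gwt Ga = -1" | "gwt Gc = -1" | "gwt Gas = 1" | "gwt Gcs = 1"
fun wwt :: "word \<Rightarrow> int" where "wwt (Wd w) = sum_list (map gwt w)"

definition Kf :: "real \<Rightarrow> falg \<Rightarrow> falg" where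
  "Kf q x = Poly_Mapping.mapp (\<lambda>w c. complex_of_real (q powr (real_of_int (wwt w) / 2)) * c) x"

definition KA :: "real \<Rightarrow> aelt \<Rightarrow> aelt" where "KA q = lift1 q (Kf q)"

definition Ln :: "real \<Rightarrow> int \<Rightarrow> aelt set" where
  "Ln q n = {X \<in> Asu q. KA q X = smulA q (complex_of_real (q powr (real_of_int n / 2))) X}"

definition CP1 :: "real \<Rightarrow> aelt set" where "CP1 q = Ln q 0"

record ('m, 'r) bimod =
  carr :: "'m set"
  badd :: "'m \<Rightarrow> 'm \<Rightarrow> 'm"
  lact :: "'r \<Rightarrow> 'm \<Rightarrow> 'm"
  ract :: "'m \<Rightarrow> 'r \<Rightarrow> 'm"

definition Lmod :: "real \<Rightarrow> int \<Rightarrow> (aelt, aelt) bimod" where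
  "Lmod q n = \<lparr> carr = Ln q n, badd = addA q, lact = mulA q, ract = mulA q \<rparr>"

text \<open>Omega^1(SU_q(2)): free left module with basis omega_+, omega_-, omega_z; an element
  x_+ omega_+ + x_- omega_- + x_z omega_z is the triple (x_+, x_-, x_z).
  Right multiplication by y in L_k: omega_+- y = q^k y omega_+-, omega_z y = q^(2k) y omega_z.\<close>
type_synonym oelt = "aelt \<times> aelt \<times> aelt"

definition om_add :: "real \<Rightarrow> oelt \<Rightarrow> oelt \<Rightarrow> oelt" where
  "om_add q u v = (case u of (x1, x2, x3) \<Rightarrow> case v of (y1, y2, y3) \<Rightarrow>
      (addA q x1 y1, addA q x2 y2, addA q x3 y3))"
definition om_lact :: "real \<Rightarrow> aelt \<Rightarrow> oelt \<Rightarrow> oelt" where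
  "om_lact q b u = (case u of (x1, x2, x3) \<Rightarrow> (mulA q b x1, mulA q b x2, mulA q b x3))"
definition om_ract_hom :: "real \<Rightarrow> int \<Rightarrow> oelt \<Rightarrow> aelt \<Rightarrow> oelt" where
  "om_ract_hom q k u y = (case u of (x1, x2, x3) \<Rightarrow>
      (smulA q (complex_of_real (q powr real_of_int k)) (mulA q x1 y),
       smulA q (complex_of_real (q powr real_of_int k)) (mulA q x2 y),
       smulA q (complex_of_real (q powr real_of_int (2 * k))) (mulA q x3 y)))"

text \<open>Right action of A(CP^1_q) = L_0 (degree k = 0).\<close>
definition Om01 :: "real \<Rightarrow> (oelt, aelt) bimod" where
  "Om01 q = \<lparr> carr = {(zeroA q, x, zeroA q) | x. x \<in> Ln q (-2)},
              badd = om_add q, lact = om_lact q, ract = (\<lambda>u b. om_ract_hom q 0 u b) \<rparr>"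
definition Om10 :: "real \<Rightarrow> (oelt, aelt) bimod" where
  "Om10 q = \<lparr> carr = {(x, zeroA q, zeroA q) | x. x \<in> Ln q 2},
              badd = om_add q, lact = om_lact q, ract = (\<lambda>u b. om_ract_hom q 0 u b) \<rparr>"

inductive_set trel :: "'r set \<Rightarrow> ('m, 'r) bimod \<Rightarrow> ('n, 'r) bimod \<Rightarrow> ('m \<times> 'n \<Rightarrow>\<^sub>0 int) set"
  for B M N where
  addl: "m \<in> carr M \<Longrightarrow> m' \<in> carr M \<Longrightarrow> n \<in> carr N \<Longrightarrow>
     Poly_Mapping.single (badd M m m', n) 1 - Poly_Mapping.single (m, n) 1
       - Poly_Mapping.single (m', n) 1 \<in> trel B M N"
| addr: "m \<in> carr M \<Longrightarrow> n \<in> carr N \<Longrightarrow> n' \<in> carr N \<Longrightarrow>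
     Poly_Mapping.single (m, badd N n n') 1 - Poly_Mapping.single (m, n) 1
       - Poly_Mapping.single (m, n') 1 \<in> trel B M N"
| bal: "m \<in> carr M \<Longrightarrow> b \<in> B \<Longrightarrow> n \<in> carr N \<Longrightarrow>
     Poly_Mapping.single (ract M m b, n) 1 - Poly_Mapping.single (m, lact N b n) 1 \<in> trel B M N"
| zero: "0 \<in> trel B M N"
| add: "x \<in> trel B M N \<Longrightarrow> y \<in> trel B M N \<Longrightarrow> x + y \<in> trel B M N"
| neg: "x \<in> trel B M N \<Longrightarrow> - x \<in> trel B M N"

definition tfree :: "('m, 'r) bimod \<Rightarrow> ('n, 'r) bimod \<Rightarrow> ('m \<times> 'n \<Rightarrow>\<^sub>0 int) set" where
  "tfree M N = {x. Poly_Mapping.keys x \<subseteq> carr M \<times> carr N}"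

definition tcls :: "'r set \<Rightarrow> ('m, 'r) bimod \<Rightarrow> ('n, 'r) bimod \<Rightarrow> ('m \<times> 'n \<Rightarrow>\<^sub>0 int)
    \<Rightarrow> ('m \<times> 'n \<Rightarrow>\<^sub>0 int) set" where
  "tcls B M N x = {y \<in> tfree M N. y - x \<in> trel B M N}"

definition push :: "('a \<Rightarrow> 'b) \<Rightarrow> ('a \<Rightarrow>\<^sub>0 int) \<Rightarrow> ('b \<Rightarrow>\<^sub>0 int)" where
  "push f x = (\<Sum>p\<in>Poly_Mapping.keys x. Poly_Mapping.single (f p) (Poly_Mapping.lookup x p))"

definition tensor :: "'r set \<Rightarrow> ('m, 'r) bimod \<Rightarrow> ('n, 'r) bimod
    \<Rightarrow> (('m \<times> 'n \<Rightarrow>\<^sub>0 int) set, 'r) bimod" where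
  "tensor B M N = \<lparr>
     carr = tcls B M N ` tfree M N,
     badd = (\<lambda>X Y. \<Union>x\<in>X. \<Union>y\<in>Y. tcls B M N (x + y)),
     lact = (\<lambda>b X. \<Union>x\<in>X. tcls B M N (push (\<lambda>(m, n). (lact M b m, n)) x)),
     ract = (\<lambda>X b. \<Union>x\<in>X. tcls B M N (push (\<lambda>(m, n). (m, ract N n b)) x)) \<rparr>"

definition bimod_iso :: "'r set \<Rightarrow> ('m, 'r) bimod \<Rightarrow> ('n, 'r) bimod \<Rightarrow> ('m \<Rightarrow> 'n) \<Rightarrow> bool" where
  "bimod_iso B M N \<Phi> \<longleftrightarrow>
     bij_betw \<Phi> (carr M) (carr N) \<and>
     (\<forall>x\<in>carr M. \<forall>y\<in>carr M. \<Phi> (badd M x y) = badd N (\<Phi> x) (\<Phi> y)) \<and>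
     (\<forall>b\<in>B. \<forall>x\<in>carr M. \<Phi> (lact M b x) = lact N b (\<Phi> x)) \<and>
     (\<forall>b\<in>B. \<forall>x\<in>carr M. \<Phi> (ract M x b) = ract N (\<Phi> x) b)"

end

theory Submission
  imports Defs
begin

lemma pm_induct:
  fixes P :: "('a \<Rightarrow>\<^sub>0 'b::ab_group_add) \<Rightarrow> bool"
  assumes "P 0" "\<And>k c x. P x \<Longrightarrow> P (Poly_Mapping.single k c + x)"
  shows "P x"
proof (induction x rule: Poly_Mapping.update_induct)
  case const then show ?case using assms by simp
next
  case (update f k v)
  have "Poly_Mapping.update k v f = Poly_Mapping.single k v + f"
    using update(1)
    by (intro poly_mapping_eqI) (auto simp: lookup_update lookup_add lookup_single when_def in_keys_iff)
  then show ?case using assms(2)[OF update(3)] by simp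
qed

locale suq =
  fixes q :: real
  assumes qpos: "0 < q"
begin

abbreviation "II \<equiv> suq_ideal q"

lemma I_neg: "x \<in> II \<Longrightarrow> - x \<in> II"
  using suq_ideal.mult[of x q "-1" 1] by simp
lemma I_diff: "x \<in> II \<Longrightarrow> y \<in> II \<Longrightarrow> x - y \<in> II"
  using suq_ideal.add[OF _ I_neg] by (metis diff_conv_add_uminus)
lemma I_lm: "x \<in> II \<Longrightarrow> u * x \<in> II"
  using suq_ideal.mult[of x q u 1] by simp
lemma I_rm: "x \<in> II \<Longrightarrow> x * u \<in> II"
  using suq_ideal.mult[of x q 1 u] by simp

lemma cls_eq: "cls q x = cls q y \<longleftrightarrow> x - y \<in> II"
proof
  assume "cls q x = cls q y"
  moreover have "x \<in> cls q x" by (simp add: cls_def suq_ideal.zero)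
  ultimately show "x - y \<in> II" by (auto simp: cls_def)
next
  assume h: "x - y \<in> II"
  show "cls q x = cls q y"
  proof (auto simp: cls_def)
    fix z assume "z - x \<in> II" then show "z - y \<in> II"
      using suq_ideal.add[OF _ h] by (metis add_diff_cancel_right' diff_add_cancel diff_diff_eq2)
  next
    fix z assume "z - y \<in> II" then show "z - x \<in> II"
      using I_diff[OF _ h] by (metis diff_diff_eq2 diff_add_cancel add_diff_cancel_left')
  qed
qed

lemma in_cls': "y \<in> cls q x \<longleftrightarrow> y - x \<in> II"
  by (simp add: cls_def)
lemma in_cls: "y \<in> cls q x \<longleftrightarrow> cls q y = cls q x"
  by (simp add: cls_eq in_cls')
lemma UN_const: "A \<noteq> {} \<Longrightarrow> (\<forall>x\<in>A. F x = C) \<Longrightarrow> (\<Union>x\<in>A. F x) = C"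
  by auto

lemma I_trans: "a - b \<in> II \<Longrightarrow> b - c \<in> II \<Longrightarrow> a - c \<in> II"
  using suq_ideal.add[of "a - b" q "b - c"] by simp

lemma lift2_cls:
  assumes "\<And>x' y'. x' - x \<in> II \<Longrightarrow> y' - y \<in> II \<Longrightarrow> f x' y' - f x y \<in> II"
  shows "lift2 q f (cls q x) (cls q y) = cls q (f x y)"
  unfolding lift2_def
proof (intro UN_const ballI)
  fix x' y' assume "x' \<in> cls q x" "y' \<in> cls q y"
  then have "f x' y' - f x y \<in> II" using assms by (simp add: in_cls')
  then show "cls q (f x' y') = cls q (f x y)" by (simp only: cls_eq)
qed (auto simp: in_cls)

lemma lift1_cls:
  assumes "\<And>x'. x' - x \<in> II \<Longrightarrow> f x' - f x \<in> II"
  shows "lift1 q f (cls q x) = cls q (f x)"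
  unfolding lift1_def
proof (intro UN_const ballI)
  fix x' assume "x' \<in> cls q x"
  then have "f x' - f x \<in> II" using assms by (simp add: in_cls')
  then show "cls q (f x') = cls q (f x)" by (simp only: cls_eq)
qed (auto simp: in_cls)

lemma add_cls[simp]: "addA q (cls q x) (cls q y) = cls q (x + y)"
  unfolding addA_def
  by (rule lift2_cls) (metis add_diff_add suq_ideal.add)

lemma mul_cls[simp]: "mulA q (cls q x) (cls q y) = cls q (x * y)"
  unfolding mulA_def
proof (rule lift2_cls)
  fix x' y' assume "x' - x \<in> II" "y' - y \<in> II"
  then have "(x' - x) * y' + x * (y' - y) \<in> II" by (intro suq_ideal.add I_lm I_rm)
  moreover have "(x' - x) * y' + x * (y' - y) = x' * y' - x * y" by (simp add: algebra_simps)
  ultimately show "x' * y' - x * y \<in> II" by simp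
qed

lemma smul_cls[simp]: "smulA q c (cls q x) = cls q (cst c * x)"
  unfolding smulA_def
  by (rule lift1_cls) (metis I_lm right_diff_distrib)

lemma cst_mult: "cst (a * b) = cst a * cst b"
  by (simp add: cst_def mult_single)
lemma cst_add: "cst (a + b) = cst a + cst b"
  by (simp add: cst_def single_add)
lemma cst_one[simp]: "cst 1 = 1"
  by (simp add: cst_def)
lemma cst_central: "cst a * x = x * cst a"
proof (induction x rule: pm_induct)
  case 1 then show ?case by simp
next
  case (2 k c x)
  have "cst a * Poly_Mapping.single k c = Poly_Mapping.single k c * cst a"
    by (simp add: cst_def mult_single mult.commute)
  with 2 show ?case by (simp add: distrib_left distrib_right)
qed

end

context suq begin

definition sc :: "word \<Rightarrow> complex" where
  "sc w = complex_of_real (q powr (real_of_int (wwt w) / 2))"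
definition sd :: "int \<Rightarrow> complex" where
  "sd k = complex_of_real (q powr (real_of_int k / 2))"

lemma lookup_Kf: "Poly_Mapping.lookup (Kf q x) w = sc w * Poly_Mapping.lookup x w"
  by (auto simp: Kf_def lookup_mapp when_def sc_def in_keys_iff)

lemma Kf_add: "Kf q (x + y) = Kf q x + Kf q y"
  by (rule poly_mapping_eqI) (simp add: lookup_Kf lookup_add distrib_left)
lemma Kf_neg: "Kf q (- x) = - Kf q x"
  by (rule poly_mapping_eqI) (simp add: lookup_Kf)
lemma Kf_diff: "Kf q (x - y) = Kf q x - Kf q y"
  by (rule poly_mapping_eqI) (simp add: lookup_Kf lookup_minus right_diff_distrib)
lemma Kf_zero[simp]: "Kf q 0 = 0"
  by (rule poly_mapping_eqI) (simp add: lookup_Kf)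
lemma Kf_single: "Kf q (Poly_Mapping.single w c) = Poly_Mapping.single w (sc w * c)"
  by (rule poly_mapping_eqI) (simp add: lookup_Kf lookup_single when_def)

lemma wwt_plus: "wwt (u + v) = wwt u + wwt v"
  by (cases u; cases v) simp
lemma wwt_zero[simp]: "wwt 0 = 0"
  by (simp add: zero_word_def)
lemma sc_plus: "sc (u + v) = sc u * sc v"
  by (simp add: sc_def wwt_plus add_divide_distrib powr_add qpos less_imp_neq[OF qpos, symmetric])
lemma sc_zero[simp]: "sc 0 = 1"
  by (simp add: sc_def less_imp_neq[OF qpos, symmetric])
lemma sd_plus: "sd (k + l) = sd k * sd l"
  by (simp add: sd_def add_divide_distrib powr_add qpos less_imp_neq[OF qpos, symmetric])
lemma sd_zero[simp]: "sd 0 = 1"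
  by (simp add: sd_def less_imp_neq[OF qpos, symmetric])

lemma Kf_mult: "Kf q (x * y) = Kf q x * Kf q y"
proof (induction x rule: pm_induct)
  case 1 then show ?case by simp
next
  case (2 k c x)
  have "Kf q (Poly_Mapping.single k c * y) = Kf q (Poly_Mapping.single k c) * Kf q y"
  proof (induction y rule: pm_induct)
    case 1 then show ?case by simp
  next
    case (2 k' c' y)
    then show ?case by (simp add: distrib_left Kf_add Kf_single mult_single sc_plus mult_ac)
  qed
  with 2 show ?case by (simp add: distrib_right Kf_add)
qed

lemma Kf_cst: "Kf q (cst c) = cst c"
  by (simp add: cst_def Kf_single)

lemma lookup_cst_mult: "Poly_Mapping.lookup (cst c * x) w = c * Poly_Mapping.lookup x w"
proof (induction x rule: pm_induct)
  case 1 then show ?case by simp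
next
  case (2 k d x)
  then show ?case by (simp add: cst_def distrib_left mult_single lookup_add lookup_single when_def)
qed

definition homw :: "int \<Rightarrow> falg \<Rightarrow> bool" where
  "homw d x \<longleftrightarrow> (\<forall>w\<in>Poly_Mapping.keys x. wwt w = d)"

lemma homw_Kf: "homw d x \<Longrightarrow> Kf q x = cst (sd d) * x"
  by (rule poly_mapping_eqI) (auto simp: homw_def lookup_Kf lookup_cst_mult sc_def sd_def in_keys_iff)

lemma homw_add: "homw d x \<Longrightarrow> homw d y \<Longrightarrow> homw d (x + y)"
  using keys_add[of x y] by (auto simp: homw_def)
lemma homw_diff: "homw d x \<Longrightarrow> homw d y \<Longrightarrow> homw d (x - y)"
  using keys_diff[of x y] by (auto simp: homw_def)
lemma homw_single: "wwt w = d \<Longrightarrow> homw d (Poly_Mapping.single w c)"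
  by (auto simp: homw_def)

lemma one_single: "(1::falg) = Poly_Mapping.single (Wd []) 1"
  by (simp add: zero_word_def[symmetric])

lemma rels_homw: "r \<in> suq_rels q \<Longrightarrow> \<exists>d. homw d r"
  unfolding suq_rels_def Let_def
  apply (simp add: gn_def cst_def mult_single)
  apply (elim disjE; simp only: one_single)
  apply (rule exI, (intro homw_add homw_diff homw_single; simp))+
  done

lemma Kf_ideal: "x \<in> II \<Longrightarrow> Kf q x \<in> II"
proof (induction rule: suq_ideal.induct)
  case (rel r)
  then obtain d where "homw d r" using rels_homw by blast
  then have "Kf q r = cst (sd d) * r" by (rule homw_Kf)
  then show ?case using I_lm[OF suq_ideal.rel[OF rel]] by simp
next
  case zero then show ?case by (simp add: suq_ideal.zero)
next
  case (add x y) then show ?case by (simp add: Kf_add suq_ideal.add)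
next
  case (mult x u v) then show ?case by (simp add: Kf_mult suq_ideal.mult)
qed

lemma KA_cls: "KA q (cls q x) = cls q (Kf q x)"
  unfolding KA_def
  by (rule lift1_cls) (metis Kf_diff Kf_ideal)

definition hom :: "int \<Rightarrow> falg \<Rightarrow> bool" where
  "hom k x \<longleftrightarrow> cls q (Kf q x) = cls q (cst (sd k) * x)"

lemma Ln_cls: "cls q x \<in> Ln q k \<longleftrightarrow> hom k x"
  by (simp add: Ln_def Asu_def KA_cls hom_def sd_def)

lemma Ln_iff: "X \<in> Ln q k \<longleftrightarrow> (\<exists>x. X = cls q x \<and> hom k x)"
proof -
  have "X \<in> Ln q k \<Longrightarrow> \<exists>x. X = cls q x" by (auto simp: Ln_def Asu_def)
  then show ?thesis using Ln_cls by blast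
qed

lemma hom_add: "hom k x \<Longrightarrow> hom k y \<Longrightarrow> hom k (x + y)"
  unfolding hom_def
  by (metis Kf_add add_cls distrib_left)
lemma hom_zero: "hom k 0"
  by (simp add: hom_def)
lemma hom_neg: "hom k x \<Longrightarrow> hom k (- x)"
  unfolding hom_def cls_eq
  by (metis Kf_neg I_neg minus_diff_eq minus_mult_right diff_minus_eq_add uminus_add_conv_diff)
lemma hom_diff: "hom k x \<Longrightarrow> hom k y \<Longrightarrow> hom k (x - y)"
  by (metis hom_add hom_neg diff_conv_add_uminus)
lemma hom_mult: "hom k x \<Longrightarrow> hom l y \<Longrightarrow> hom (k + l) (x * y)"
proof -
  assume a: "hom k x" "hom l y"
  have "cls q (Kf q (x * y)) = mulA q (cls q (Kf q x)) (cls q (Kf q y))" by (simp add: Kf_mult)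
  also have "\<dots> = cls q (cst (sd k) * x * (cst (sd l) * y))" using a by (simp add: hom_def)
  also have "cst (sd k) * x * (cst (sd l) * y) = cst (sd (k + l)) * (x * y)"
    by (simp add: sd_plus cst_mult mult.assoc) (metis cst_central mult.assoc)
  finally show ?thesis by (simp add: hom_def)
qed
lemma hom_cst: "hom k x \<Longrightarrow> hom k (cst c * x)"
proof -
  assume a: "hom k x"
  have "cls q (Kf q (cst c * x)) = mulA q (cls q (cst c)) (cls q (Kf q x))" by (simp add: Kf_mult Kf_cst)
  also have "\<dots> = cls q (cst c * (cst (sd k) * x))" using a by (simp add: hom_def)
  also have "cst c * (cst (sd k) * x) = cst (sd k) * (cst c * x)"
    by (simp add: mult.assoc[symmetric] cst_mult[symmetric] mult.commute)
  finally show ?thesis by (simp add: hom_def)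
qed
lemma of_int_cst: "(of_int n :: falg) = cst (of_int n)"
proof (induction n rule: int_induct[where k=0])
  case base then show ?case by (simp add: cst_def)
next
  case (step1 i) then show ?case by (simp add: cst_add)
next
  case (step2 i) then show ?case by (simp add: cst_def single_diff)
qed
lemma hom_of_int: "hom k x \<Longrightarrow> hom k (of_int n * x)"
  by (simp add: of_int_cst hom_cst)
lemma hom_one: "hom 0 1"
  by (simp add: hom_def Kf_cst[of 1, simplified])
lemma hom_gn: "hom (gwt g) (gn g)"
  by (simp add: hom_def gn_def Kf_single sc_def sd_def cst_def mult_single)
lemma hom_sum_list: "(\<And>x. x \<in> set xs \<Longrightarrow> hom k x) \<Longrightarrow> hom k (sum_list xs)"
  by (induction xs) (auto intro: hom_add hom_zero)
lemma hom_sum: "(\<And>i. i \<in> A \<Longrightarrow> hom k (f i)) \<Longrightarrow> hom k (sum f A)"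
  by (induction A rule: infinite_finite_induct) (auto intro: hom_add hom_zero)

end

context suq begin

definition T :: "(falg \<times> falg) list \<Rightarrow> falg" where
  "T ps = sum_list (map (\<lambda>(u, v). u * v) ps)"

definition SG :: "int \<Rightarrow> bool" where
  "SG l \<longleftrightarrow> (\<exists>ps. (\<forall>(u, v)\<in>set ps. hom (- l) u \<and> hom l v) \<and> T ps - 1 \<in> II)"

lemma SG_0: "SG 0"
  unfolding SG_def
  by (rule exI[of _ "[(1, 1)]"]) (simp add: T_def hom_one suq_ideal.zero)

lemma SG_1: "SG 1"
  unfolding SG_def
proof (rule exI[of _ "[(gn Ga, gn Gas), (cst (complex_of_real q) * cst (complex_of_real q) * gn Gc, gn Gcs)]"], intro conjI)
  show "\<forall>(u, v)\<in>set [(gn Ga, gn Gas), (cst (complex_of_real q) * cst (complex_of_real q) * gn Gc, gn Gcs)].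
      hom (- 1) u \<and> hom 1 v"
    using hom_gn[of Ga] hom_gn[of Gas] hom_gn[of Gc] hom_gn[of Gcs]
    by (auto simp: mult.assoc intro!: hom_cst)
  have "gn Ga * gn Gas + cst (complex_of_real q) * cst (complex_of_real q) * gn Gc * gn Gcs - 1 \<in> II"
    by (rule suq_ideal.rel) (simp add: suq_rels_def Let_def)
  then show "T [(gn Ga, gn Gas), (cst (complex_of_real q) * cst (complex_of_real q) * gn Gc, gn Gcs)] - 1 \<in> II"
    by (simp add: T_def)
qed

lemma SG_m1: "SG (- 1)"
  unfolding SG_def
proof (rule exI[of _ "[(gn Gas, gn Ga), (gn Gcs, gn Gc)]"], intro conjI)
  show "\<forall>(u, v)\<in>set [(gn Gas, gn Ga), (gn Gcs, gn Gc)]. hom (- (- 1)) u \<and> hom (- 1) v"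
    using hom_gn[of Ga] hom_gn[of Gas] hom_gn[of Gc] hom_gn[of Gcs] by auto
  have "gn Gas * gn Ga + gn Gcs * gn Gc - 1 \<in> II"
    by (rule suq_ideal.rel) (simp add: suq_rels_def Let_def)
  then show "T [(gn Gas, gn Ga), (gn Gcs, gn Gc)] - 1 \<in> II"
    by (simp add: T_def)
qed

lemma T_inner: "sum_list (map (\<lambda>(u', v'). u * u' * (v' * v)) rs) = u * T rs * v"
  by (induction rs) (auto simp: T_def algebra_simps)

lemma T_concat: "T (concat (map (\<lambda>(u, v). map (\<lambda>(u', v'). (u * u', v' * v)) rs) ps))
   = sum_list (map (\<lambda>(u, v). u * T rs * v) ps)"
proof (induction ps)
  case Nil then show ?case by (simp add: T_def)
next
  case (Cons p ps)
  obtain u v where p: "p = (u, v)" by (cases p)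
  have "T (map (\<lambda>(u', v'). (u * u', v' * v)) rs) = u * T rs * v"
    by (induction rs) (auto simp: T_def algebra_simps)
  then show ?case using Cons by (simp add: p T_def)
qed

lemma T_approx: "S - 1 \<in> II \<Longrightarrow> sum_list (map (\<lambda>(u, v). u * S * v) ps) - T ps \<in> II"
proof (induction ps)
  case Nil then show ?case by (simp add: T_def suq_ideal.zero)
next
  case (Cons p ps)
  obtain u v where p: "p = (u, v)" by (cases p)
  have "u * (S - 1) * v \<in> II" using Cons by (intro I_lm I_rm)
  then have "u * (S - 1) * v + (sum_list (map (\<lambda>(u, v). u * S * v) ps) - T ps) \<in> II"
    using Cons by (intro suq_ideal.add)
  then show ?case by (simp add: p T_def algebra_simps)
qed

lemma SG_add: "SG l \<Longrightarrow> SG m \<Longrightarrow> SG (l + m)"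
proof -
  assume "SG l" "SG m"
  then obtain ps rs where ps: "\<forall>(u, v)\<in>set ps. hom (- l) u \<and> hom l v" "T ps - 1 \<in> II"
    and rs: "\<forall>(u, v)\<in>set rs. hom (- m) u \<and> hom m v" "T rs - 1 \<in> II"
    unfolding SG_def by blast
  let ?n = "concat (map (\<lambda>(u, v). map (\<lambda>(u', v'). (u * u', v' * v)) rs) ps)"
  have "hom (- (l + m)) (u * u') \<and> hom (l + m) (v' * v)"
    if "(u, v) \<in> set ps" "(u', v') \<in> set rs" for u v u' v'
  proof -
    from that have h: "hom (- l) u" "hom l v" "hom (- m) u'" "hom m v'" using ps rs by auto
    show "hom (- (l + m)) (u * u') \<and> hom (l + m) (v' * v)"
      using hom_mult[OF h(1) h(3)] hom_mult[OF h(4) h(2)] by (simp add: add.commute)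
  qed
  then have "\<forall>(u, v)\<in>set ?n. hom (- (l + m)) u \<and> hom (l + m) v" by auto
  moreover have "T ?n - 1 \<in> II"
    using I_trans[OF T_approx[OF rs(2), of ps] ps(2)] by (simp only: T_concat)
  ultimately show "SG (l + m)" unfolding SG_def by blast
qed

lemma SG_all: "SG l"
proof -
  have p: "SG (int n)" for n
  proof (induction n)
    case (Suc n) then show ?case using SG_add[OF Suc SG_1] by (simp add: add.commute)
  qed (simp add: SG_0)
  have m: "SG (- int n)" for n
  proof (induction n)
    case (Suc n) then show ?case using SG_add[OF Suc SG_m1] by (simp add: algebra_simps)
  qed (simp add: SG_0)
  show ?thesis
  proof (cases "l \<ge> 0")
    case True then show ?thesis using p[of "nat l"] by simp
  next
    case False then show ?thesis using m[of "nat (- l)"] by simp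
  qed
qed

lemma SG_obtain:
  obtains ps where "\<forall>(u, v)\<in>set ps. hom (- l) u \<and> hom l v" "T ps - 1 \<in> II"
  using SG_all[of l] unfolding SG_def by blast

end

definition rep :: "real \<Rightarrow> aelt \<Rightarrow> falg" where
  "rep q X = (SOME x. X = cls q x)"

definition lin :: "('p \<Rightarrow> falg) \<Rightarrow> ('p \<Rightarrow>\<^sub>0 int) \<Rightarrow> falg" where
  "lin g x = (\<Sum>i\<in>Poly_Mapping.keys x. of_int (Poly_Mapping.lookup x i) * g i)"

lemma lin_superset: "finite S \<Longrightarrow> Poly_Mapping.keys x \<subseteq> S \<Longrightarrow>
   lin g x = (\<Sum>i\<in>S. of_int (Poly_Mapping.lookup x i) * g i)"
  unfolding lin_def by (rule sum.mono_neutral_left) (auto simp: in_keys_iff)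

lemma lin_add: "lin g (x + y) = lin g x + lin g y"
proof -
  let ?S = "Poly_Mapping.keys x \<union> Poly_Mapping.keys y"
  have "lin g (x + y) = (\<Sum>i\<in>?S. of_int (Poly_Mapping.lookup (x + y) i) * g i)"
    using keys_add[of x y] by (intro lin_superset) auto
  also have "\<dots> = (\<Sum>i\<in>?S. of_int (Poly_Mapping.lookup x i) * g i) + (\<Sum>i\<in>?S. of_int (Poly_Mapping.lookup y i) * g i)"
    by (simp add: lookup_add distrib_right sum.distrib)
  also have "\<dots> = lin g x + lin g y"
    by (subst (1 2) lin_superset[of ?S]) auto
  finally show ?thesis .
qed

lemma lin_zero[simp]: "lin g 0 = 0"
  by (simp add: lin_def)
lemma lin_neg: "lin g (- x) = - lin g x"
  by (metis add_eq_0_iff lin_add lin_zero)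
lemma lin_diff: "lin g (x - y) = lin g x - lin g y"
  by (metis diff_conv_add_uminus lin_add lin_neg)
lemma lin_single: "lin g (frag_of p) = g p"
  by (simp add: lin_def)
lemma lin_frag_extend: "lin g (frag_extend h x) = lin (\<lambda>p. lin g (h p)) x"
  by (induction x rule: frag_induction[OF subset_UNIV])
     (simp_all add: frag_extend_diff lin_diff lin_single)
lemma lin_sum_list: "lin g (sum_list (map f xs)) = sum_list (map (\<lambda>p. lin g (f p)) xs)"
  by (induction xs) (simp_all add: lin_add)
lemma lin_lmult: "r * lin g x = lin (\<lambda>p. r * g p) x"
  unfolding lin_def sum_distrib_left
  by (rule sum.cong) (simp_all add: mult.assoc[symmetric] mult_of_int_commute[of _ r, symmetric])

context suq begin
lemma I_sum: "(\<And>i. i \<in> A \<Longrightarrow> f i \<in> II) \<Longrightarrow> sum f A \<in> II"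
  by (induction A rule: infinite_finite_induct) (auto intro: suq_ideal.zero suq_ideal.add)
lemma I_sum_list: "(\<And>p. p \<in> set xs \<Longrightarrow> f p \<in> II) \<Longrightarrow> sum_list (map f xs) \<in> II"
  by (induction xs) (auto intro: suq_ideal.zero suq_ideal.add)
lemma lin_cong_I: "(\<And>p. p \<in> Poly_Mapping.keys x \<Longrightarrow> g1 p - g2 p \<in> II) \<Longrightarrow> lin g1 x - lin g2 x \<in> II"
proof -
  assume h: "\<And>p. p \<in> Poly_Mapping.keys x \<Longrightarrow> g1 p - g2 p \<in> II"
  have "lin g1 x - lin g2 x = (\<Sum>i\<in>Poly_Mapping.keys x. of_int (Poly_Mapping.lookup x i) * (g1 i - g2 i))"
    by (simp add: lin_def sum_subtractf right_diff_distrib)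
  also have "\<dots> \<in> II"
    by (intro I_sum I_lm h)
  finally show ?thesis .
qed
end

lemma lin_rmult: "lin g x * r = lin (\<lambda>p. g p * r) x"
  by (simp add: lin_def sum_distrib_right mult_ac)

lemma push_fe: "push f x = frag_extend (frag_of \<circ> f) x"
proof -
  have *: "frag_cmul c (frag_of k) = Poly_Mapping.single k c" for c k
    by (rule poly_mapping_eqI) (simp add: lookup_single when_def)
  show ?thesis by (simp add: push_def frag_extend_def *)
qed

lemma push_diff: "push f (x - y) = push f x - push f y"
  by (simp add: push_fe frag_extend_diff)
lemma push_add: "push f (x + y) = push f x + push f y"
  by (simp add: push_fe frag_extend_add)
lemma push_neg: "push f (- x) = - push f x"
  by (simp add: push_fe frag_extend_minus)
lemma push_single: "push f (frag_of p) = frag_of (f p)"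
  by (simp add: push_fe)
lemma keys_push: "Poly_Mapping.keys (push f x) \<subseteq> f ` Poly_Mapping.keys x"
  using keys_frag_extend[of "frag_of \<circ> f" x] by (auto simp: push_fe)

lemma keys_sum_list: "Poly_Mapping.keys (sum_list (map f xs)) \<subseteq> (\<Union>x\<in>set xs. Poly_Mapping.keys (f x))"
proof (induction xs)
  case (Cons a xs) then show ?case using keys_add[of "f a" "sum_list (map f xs)"] by auto
qed simp

lemma trel_diff: "x \<in> trel B M N \<Longrightarrow> y \<in> trel B M N \<Longrightarrow> x - y \<in> trel B M N"
  by (metis diff_conv_add_uminus trel.add trel.neg)
lemma trel_sum_list: "(\<And>p. p \<in> set xs \<Longrightarrow> f p \<in> trel B M N) \<Longrightarrow> sum_list (map f xs) \<in> trel B M N"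
  by (induction xs) (auto intro: trel.zero trel.add)

context suq begin

lemma Ln_rep: "X \<in> Ln q j \<Longrightarrow> cls q (rep q X) = X \<and> hom j (rep q X)"
proof -
  assume "X \<in> Ln q j"
  then obtain x where x: "X = cls q x" "hom j x" using Ln_iff by blast
  then have "X = cls q (rep q X)" unfolding rep_def by (metis (mono_tags) someI)
  moreover then have "hom j (rep q X)" using \<open>X \<in> Ln q j\<close> Ln_cls by metis
  ultimately show ?thesis by simp
qed

lemma rep_mod: "X \<in> Ln q j \<Longrightarrow> cls q z = X \<Longrightarrow> rep q X - z \<in> II"
  using Ln_rep cls_eq by metis

lemma Ln_Asu: "X \<in> Ln q j \<Longrightarrow> X \<in> Asu q"
  by (simp add: Ln_def)

lemma asu_distl: "X \<in> Asu q \<Longrightarrow> Y \<in> Asu q \<Longrightarrow> Z \<in> Asu q \<Longrightarrow>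
   mulA q Z (addA q X Y) = addA q (mulA q Z X) (mulA q Z Y)"
  by (auto simp: Asu_def distrib_left)
lemma asu_distr: "X \<in> Asu q \<Longrightarrow> Y \<in> Asu q \<Longrightarrow> Z \<in> Asu q \<Longrightarrow>
   mulA q (addA q X Y) Z = addA q (mulA q X Z) (mulA q Y Z)"
  by (auto simp: Asu_def distrib_right)
lemma asu_assoc: "X \<in> Asu q \<Longrightarrow> Y \<in> Asu q \<Longrightarrow> Z \<in> Asu q \<Longrightarrow>
   mulA q (mulA q X Y) Z = mulA q X (mulA q Y Z)"
  by (auto simp: Asu_def mult.assoc)

lemma Ln_add: "X \<in> Ln q j \<Longrightarrow> Y \<in> Ln q j \<Longrightarrow> addA q X Y \<in> Ln q j"
  using Ln_iff Ln_cls hom_add by (metis add_cls)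
lemma Ln_mul: "X \<in> Ln q j \<Longrightarrow> Y \<in> Ln q i \<Longrightarrow> mulA q X Y \<in> Ln q (j + i)"
  using Ln_iff Ln_cls hom_mult by (metis mul_cls)

end

locale tens = suq +
  fixes M :: "('m, aelt) bimod" and N :: "('n, aelt) bimod"
    and eM :: "'m \<Rightarrow> aelt" and eN :: "'n \<Rightarrow> aelt" and k l :: int
  assumes isoM: "bimod_iso (CP1 q) M (Lmod q k) eM"
      and isoN: "bimod_iso (CP1 q) N (Lmod q l) eN"
      and clM_add: "\<And>x y. x \<in> carr M \<Longrightarrow> y \<in> carr M \<Longrightarrow> badd M x y \<in> carr M"
      and clM_l: "\<And>b x. b \<in> CP1 q \<Longrightarrow> x \<in> carr M \<Longrightarrow> lact M b x \<in> carr M"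
      and clM_r: "\<And>b x. b \<in> CP1 q \<Longrightarrow> x \<in> carr M \<Longrightarrow> ract M x b \<in> carr M"
      and clN_add: "\<And>x y. x \<in> carr N \<Longrightarrow> y \<in> carr N \<Longrightarrow> badd N x y \<in> carr N"
      and clN_l: "\<And>b x. b \<in> CP1 q \<Longrightarrow> x \<in> carr N \<Longrightarrow> lact N b x \<in> carr N"
      and clN_r: "\<And>b x. b \<in> CP1 q \<Longrightarrow> x \<in> carr N \<Longrightarrow> ract N x b \<in> carr N"
begin

lemma isoM_u: "bij_betw eM (carr M) (Ln q k) \<and>
   (\<forall>x\<in>carr M. \<forall>y\<in>carr M. eM (badd M x y) = addA q (eM x) (eM y)) \<and>
   (\<forall>b\<in>CP1 q. \<forall>x\<in>carr M. eM (lact M b x) = mulA q b (eM x)) \<and>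
   (\<forall>b\<in>CP1 q. \<forall>x\<in>carr M. eM (ract M x b) = mulA q (eM x) b)"
  using isoM unfolding bimod_iso_def Lmod_def by simp
lemma isoN_u: "bij_betw eN (carr N) (Ln q l) \<and>
   (\<forall>x\<in>carr N. \<forall>y\<in>carr N. eN (badd N x y) = addA q (eN x) (eN y)) \<and>
   (\<forall>b\<in>CP1 q. \<forall>x\<in>carr N. eN (lact N b x) = mulA q b (eN x)) \<and>
   (\<forall>b\<in>CP1 q. \<forall>x\<in>carr N. eN (ract N x b) = mulA q (eN x) b)"
  using isoN unfolding bimod_iso_def Lmod_def by simp

lemma bijM: "bij_betw eM (carr M) (Ln q k)" using isoM_u[THEN conjunct1] .
lemma bijN: "bij_betw eN (carr N) (Ln q l)" using isoN_u[THEN conjunct1] .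
lemma eM_in: "m \<in> carr M \<Longrightarrow> eM m \<in> Ln q k" by (rule bij_betw_apply[OF bijM])
lemma eN_in: "n \<in> carr N \<Longrightarrow> eN n \<in> Ln q l" by (rule bij_betw_apply[OF bijN])
lemma eM_add: "x \<in> carr M \<Longrightarrow> y \<in> carr M \<Longrightarrow> eM (badd M x y) = addA q (eM x) (eM y)"
  using isoM_u[THEN conjunct2, THEN conjunct1] by simp
lemma eM_l: "b \<in> CP1 q \<Longrightarrow> x \<in> carr M \<Longrightarrow> eM (lact M b x) = mulA q b (eM x)"
  using isoM_u[THEN conjunct2, THEN conjunct2, THEN conjunct1] by simp
lemma eM_r: "b \<in> CP1 q \<Longrightarrow> x \<in> carr M \<Longrightarrow> eM (ract M x b) = mulA q (eM x) b"
  using isoM_u[THEN conjunct2, THEN conjunct2, THEN conjunct2] by simp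
lemma eN_add: "x \<in> carr N \<Longrightarrow> y \<in> carr N \<Longrightarrow> eN (badd N x y) = addA q (eN x) (eN y)"
  using isoN_u[THEN conjunct2, THEN conjunct1] by simp
lemma eN_l: "b \<in> CP1 q \<Longrightarrow> x \<in> carr N \<Longrightarrow> eN (lact N b x) = mulA q b (eN x)"
  using isoN_u[THEN conjunct2, THEN conjunct2, THEN conjunct1] by simp
lemma eN_r: "b \<in> CP1 q \<Longrightarrow> x \<in> carr N \<Longrightarrow> eN (ract N x b) = mulA q (eN x) b"
  using isoN_u[THEN conjunct2, THEN conjunct2, THEN conjunct2] by simp

definition "eMi = inv_into (carr M) eM"
definition "eNi = inv_into (carr N) eN"

lemma eMi_in: "X \<in> Ln q k \<Longrightarrow> eMi X \<in> carr M"
  unfolding eMi_def by (metis bijM bij_betw_def inv_into_into)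
lemma eM_eMi: "X \<in> Ln q k \<Longrightarrow> eM (eMi X) = X"
  unfolding eMi_def by (metis bijM bij_betw_def f_inv_into_f)
lemma eMi_char: "m \<in> carr M \<Longrightarrow> eM m = X \<Longrightarrow> eMi X = m"
  unfolding eMi_def by (metis bijM bij_betw_def inv_into_f_f)
lemma eNi_in: "X \<in> Ln q l \<Longrightarrow> eNi X \<in> carr N"
  unfolding eNi_def by (metis bijN bij_betw_def inv_into_into)
lemma eN_eNi: "X \<in> Ln q l \<Longrightarrow> eN (eNi X) = X"
  unfolding eNi_def by (metis bijN bij_betw_def f_inv_into_f)
lemma eNi_char: "n \<in> carr N \<Longrightarrow> eN n = X \<Longrightarrow> eNi X = n"
  unfolding eNi_def by (metis bijN bij_betw_def inv_into_f_f)
lemma eM_inj: "m \<in> carr M \<Longrightarrow> m' \<in> carr M \<Longrightarrow> eM m = eM m' \<Longrightarrow> m = m'"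
  by (metis eMi_char)
lemma eN_inj: "n \<in> carr N \<Longrightarrow> n' \<in> carr N \<Longrightarrow> eN n = eN n' \<Longrightarrow> n = n'"
  by (metis eNi_char)

lemma B_Asu: "b \<in> CP1 q \<Longrightarrow> b \<in> Asu q" by (simp add: CP1_def Ln_def)
lemma eM_Asu: "m \<in> carr M \<Longrightarrow> eM m \<in> Asu q" by (rule Ln_Asu[OF eM_in])
lemma eN_Asu: "n \<in> carr N \<Longrightarrow> eN n \<in> Asu q" by (rule Ln_Asu[OF eN_in])

lemma M_lact_badd: "b \<in> CP1 q \<Longrightarrow> m \<in> carr M \<Longrightarrow> m' \<in> carr M \<Longrightarrow>
   lact M b (badd M m m') = badd M (lact M b m) (lact M b m')"
  by (rule eM_inj) (simp_all add: clM_add clM_l eM_add eM_l asu_distl B_Asu eM_Asu)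
lemma M_lact_ract: "b \<in> CP1 q \<Longrightarrow> b' \<in> CP1 q \<Longrightarrow> m \<in> carr M \<Longrightarrow>
   lact M b (ract M m b') = ract M (lact M b m) b'"
  by (rule eM_inj) (simp_all add: clM_r clM_l eM_r eM_l asu_assoc B_Asu eM_Asu)
lemma N_ract_badd: "b \<in> CP1 q \<Longrightarrow> n \<in> carr N \<Longrightarrow> n' \<in> carr N \<Longrightarrow>
   ract N (badd N n n') b = badd N (ract N n b) (ract N n' b)"
  by (rule eN_inj) (simp_all add: clN_add clN_r eN_add eN_r asu_distr B_Asu eN_Asu)
lemma N_lact_ract: "b \<in> CP1 q \<Longrightarrow> b' \<in> CP1 q \<Longrightarrow> n \<in> carr N \<Longrightarrow>
   lact N b' (ract N n b) = ract N (lact N b' n) b"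
  by (rule eN_inj) (simp_all add: clN_r clN_l eN_r eN_l asu_assoc B_Asu eN_Asu)

abbreviation "TR \<equiv> trel (CP1 q) M N"
abbreviation "TF \<equiv> tfree M N"
abbreviation "tc \<equiv> tcls (CP1 q) M N"
abbreviation "TT \<equiv> tensor (CP1 q) M N"

lemma zero_Ln: "cls q 0 \<in> Ln q j"
  by (simp add: Ln_cls hom_zero)

lemma TR_zeroM: "n \<in> carr N \<Longrightarrow> frag_of (eMi (cls q 0), n) \<in> TR"
proof -
  assume n: "n \<in> carr N"
  let ?m = "eMi (cls q 0)"
  have m: "?m \<in> carr M" by (simp add: eMi_in zero_Ln)
  have "badd M ?m ?m = ?m"
    by (rule eM_inj) (simp_all add: m clM_add eM_add eM_eMi zero_Ln)
  then have "frag_of (?m, n) - frag_of (?m, n) - frag_of (?m, n) \<in> TR"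
    using trel.addl[OF m m n, of "CP1 q"] by simp
  then show ?thesis using trel.neg by fastforce
qed

lemma TR_zeroN: "m \<in> carr M \<Longrightarrow> frag_of (m, eNi (cls q 0)) \<in> TR"
proof -
  assume m: "m \<in> carr M"
  let ?n = "eNi (cls q 0)"
  have n: "?n \<in> carr N" by (simp add: eNi_in zero_Ln)
  have "badd N ?n ?n = ?n"
    by (rule eN_inj) (simp_all add: n clN_add eN_add eN_eNi zero_Ln)
  then have "frag_of (m, ?n) - frag_of (m, ?n) - frag_of (m, ?n) \<in> TR"
    using trel.addr[OF m n n, of "CP1 q"] by simp
  then show ?thesis using trel.neg by fastforce
qed

definition G :: "'m \<times> 'n \<Rightarrow> falg" where
  "G p = rep q (eM (fst p)) * rep q (eN (snd p))"
definition Fr :: "('m \<times> 'n \<Rightarrow>\<^sub>0 int) \<Rightarrow> falg" where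
  "Fr = lin G"

lemma hom_G: "p \<in> carr M \<times> carr N \<Longrightarrow> hom (k + l) (G p)"
proof -
  assume p: "p \<in> carr M \<times> carr N"
  then have "hom k (rep q (eM (fst p)))" "hom l (rep q (eN (snd p)))"
    using Ln_rep[OF eM_in] Ln_rep[OF eN_in] by auto
  then show ?thesis unfolding G_def by (rule hom_mult)
qed

lemma hom_Fr: "Poly_Mapping.keys x \<subseteq> carr M \<times> carr N \<Longrightarrow> hom (k + l) (Fr x)"
  unfolding Fr_def lin_def by (intro hom_sum hom_of_int hom_G) auto

lemma Fr_trel: "x \<in> TR \<Longrightarrow> Fr x \<in> II"
proof (induction rule: trel.induct)
  case (addl m m' n)
  let ?x = "rep q (eM m)" and ?x' = "rep q (eM m')" and ?y = "rep q (eN n)" and ?z = "rep q (eM (badd M m m'))"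
  have c: "cls q ?x = eM m" "cls q ?x' = eM m'" using addl eM_in Ln_rep by blast+
  have "cls q (?x + ?x') = addA q (cls q ?x) (cls q ?x')" by simp
  also have "\<dots> = eM (badd M m m')" using c addl by (simp add: eM_add)
  finally have "cls q (?x + ?x') = eM (badd M m m')" .
  then have "?z - (?x + ?x') \<in> II" using rep_mod eM_in clM_add addl by blast
  then have "(?z - (?x + ?x')) * ?y \<in> II" by (rule I_rm)
  then show ?case by (simp add: Fr_def lin_diff lin_add lin_neg lin_single G_def algebra_simps)
next
  case (addr m n n')
  let ?x = "rep q (eN n)" and ?x' = "rep q (eN n')" and ?y = "rep q (eM m)" and ?z = "rep q (eN (badd N n n'))"
  have c: "cls q ?x = eN n" "cls q ?x' = eN n'" using addr eN_in Ln_rep by blast+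
  have "cls q (?x + ?x') = addA q (cls q ?x) (cls q ?x')" by simp
  also have "\<dots> = eN (badd N n n')" using c addr by (simp add: eN_add)
  finally have "cls q (?x + ?x') = eN (badd N n n')" .
  then have "?z - (?x + ?x') \<in> II" using rep_mod eN_in clN_add addr by blast
  then have "?y * (?z - (?x + ?x')) \<in> II" by (rule I_lm)
  then show ?case by (simp add: Fr_def lin_diff lin_add lin_neg lin_single G_def algebra_simps)
next
  case (bal m b n)
  let ?x = "rep q (eM m)" and ?y = "rep q (eN n)" and ?rb = "rep q b"
    and ?z = "rep q (eM (ract M m b))" and ?w = "rep q (eN (lact N b n))"
  have c: "cls q ?x = eM m" "cls q ?y = eN n" "cls q ?rb = b"
    using bal eM_in eN_in Ln_rep CP1_def by blast+
  have "cls q (?x * ?rb) = mulA q (cls q ?x) (cls q ?rb)" by simp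
  also have "\<dots> = eM (ract M m b)" using c bal by (simp add: eM_r)
  finally have "cls q (?x * ?rb) = eM (ract M m b)" .
  then have z: "?z - ?x * ?rb \<in> II" using rep_mod eM_in clM_r bal by blast
  have "cls q (?rb * ?y) = mulA q (cls q ?rb) (cls q ?y)" by simp
  also have "\<dots> = eN (lact N b n)" using c bal by (simp add: eN_l)
  finally have "cls q (?rb * ?y) = eN (lact N b n)" .
  then have w: "?w - ?rb * ?y \<in> II" using rep_mod eN_in clN_l bal by blast
  have "(?z - ?x * ?rb) * ?y - ?x * (?w - ?rb * ?y) \<in> II"
    by (intro I_diff I_rm I_lm z w)
  then show ?case by (simp add: Fr_def lin_diff lin_add lin_neg lin_single G_def algebra_simps)
next
  case zero then show ?case by (simp add: Fr_def suq_ideal.zero)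
next
  case (add x y) then show ?case by (simp add: Fr_def lin_add suq_ideal.add)
next
  case (neg x) then show ?case by (simp add: Fr_def lin_neg I_neg)
qed

end

lemma sum_list_3: "sum_list (map (\<lambda>x. f x - g x + h x) xs) =
   sum_list (map f xs) - sum_list (map g xs) + sum_list (map (h :: _ \<Rightarrow> 'a::ab_group_add) xs)"
  by (induction xs) (simp_all add: algebra_simps)
lemma sum_list_2: "sum_list (map (\<lambda>x. f x - g x) xs) =
   sum_list (map f xs) - sum_list (map (g :: _ \<Rightarrow> 'a::ab_group_add) xs)"
  by (induction xs) (simp_all add: algebra_simps)

lemma push_zero: "push f 0 = 0" by (simp add: push_def)

context tens begin

lemma tc_self: "x \<in> TF \<Longrightarrow> x \<in> tc x"
  by (simp add: tcls_def trel.zero)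
lemma tc_memD: "y \<in> tc x \<Longrightarrow> y \<in> TF \<and> y - x \<in> TR"
  by (simp add: tcls_def)
lemma tc_eqI: "x - y \<in> TR \<Longrightarrow> tc x = tc y"
proof -
  assume h: "x - y \<in> TR"
  have "z - y \<in> TR" if "z - x \<in> TR" for z
    using trel.add[OF that h] by simp
  moreover have "z - x \<in> TR" if "z - y \<in> TR" for z
    using trel_diff[OF that h] by simp
  ultimately show ?thesis unfolding tcls_def by blast
qed
lemma tc_eqD: "x \<in> TF \<Longrightarrow> tc x = tc y \<Longrightarrow> x - y \<in> TR"
  using tc_self tc_memD by metis
lemma TF_add: "x \<in> TF \<Longrightarrow> y \<in> TF \<Longrightarrow> x + y \<in> TF"
  using keys_add[of x y] by (auto simp: tfree_def)
lemma TF_diff: "x \<in> TF \<Longrightarrow> y \<in> TF \<Longrightarrow> x - y \<in> TF"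
  using keys_diff[of x y] by (auto simp: tfree_def)

definition Phi :: "('m \<times> 'n \<Rightarrow>\<^sub>0 int) set \<Rightarrow> aelt" where
  "Phi X = cls q (Fr (SOME x. x \<in> X))"

lemma Phi_tc: "x \<in> TF \<Longrightarrow> Phi (tc x) = cls q (Fr x)"
proof -
  assume x: "x \<in> TF"
  let ?y = "SOME y. y \<in> tc x"
  have "?y \<in> tc x" using tc_self[OF x] by (rule someI)
  then have "?y - x \<in> TR" using tc_memD by blast
  then have "Fr ?y - Fr x \<in> II" using Fr_trel[OF \<open>?y - x \<in> TR\<close>] by (simp add: Fr_def lin_diff)
  then show ?thesis by (simp add: Phi_def cls_eq)
qed

lemma carrT: "carr TT = tc ` TF" by (simp add: tensor_def)

lemma badd_T: "x \<in> TF \<Longrightarrow> y \<in> TF \<Longrightarrow> badd TT (tc x) (tc y) = tc (x + y)"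
  unfolding tensor_def bimod.simps
proof (intro UN_const ballI)
  fix x' y' assume "x' \<in> tc x" "y' \<in> tc y"
  then have "x' - x \<in> TR" "y' - y \<in> TR" using tc_memD by blast+
  then have "(x' - x) + (y' - y) \<in> TR" by (rule trel.add)
  then show "tc (x' + y') = tc (x + y)" by (intro tc_eqI) (simp add: algebra_simps)
qed (use tc_self in auto)

lemma pushL_TR: "x \<in> TR \<Longrightarrow> b \<in> CP1 q \<Longrightarrow> push (\<lambda>(m, n). (lact M b m, n)) x \<in> TR"
proof (induction rule: trel.induct)
  case (addl m m' n)
  then show ?case
    by (simp add: push_diff push_single M_lact_badd trel.addl clM_l)
next
  case (addr m n n')
  then show ?case by (simp add: push_diff push_single trel.addr clM_l)
next
  case (bal m b' n)
  then show ?case by (simp add: push_diff push_single M_lact_ract trel.bal clM_l)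
qed (simp_all add: push_add push_neg push_zero trel.zero trel.add trel.neg)

lemma pushR_TR: "x \<in> TR \<Longrightarrow> b \<in> CP1 q \<Longrightarrow> push (\<lambda>(m, n). (m, ract N n b)) x \<in> TR"
proof (induction rule: trel.induct)
  case (addl m m' n)
  then show ?case by (simp add: push_diff push_single trel.addl clN_r)
next
  case (addr m n n')
  then show ?case by (simp add: push_diff push_single N_ract_badd trel.addr clN_r)
next
  case (bal m b' n)
  then show ?case by (simp add: push_diff push_single N_lact_ract[symmetric] trel.bal clN_r)
qed (simp_all add: push_add push_neg push_zero trel.zero trel.add trel.neg)

lemma pushL_TF: "b \<in> CP1 q \<Longrightarrow> x \<in> TF \<Longrightarrow> push (\<lambda>(m, n). (lact M b m, n)) x \<in> TF"
proof -
  assume b: "b \<in> CP1 q" and x: "x \<in> TF"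
  have i2: "(\<lambda>(m, n). (lact M b m, n)) ` (carr M \<times> carr N) \<subseteq> carr M \<times> carr N" using b by (auto simp: clM_l)
  have i1: "(\<lambda>(m, n). (lact M b m, n)) ` Poly_Mapping.keys x \<subseteq> (\<lambda>(m, n). (lact M b m, n)) ` (carr M \<times> carr N)"
    using x by (intro image_mono) (simp add: tfree_def)
  show ?thesis unfolding tfree_def mem_Collect_eq
    by (rule order_trans[OF keys_push order_trans[OF i1 i2]])
qed
lemma pushR_TF: "b \<in> CP1 q \<Longrightarrow> x \<in> TF \<Longrightarrow> push (\<lambda>(m, n). (m, ract N n b)) x \<in> TF"
proof -
  assume b: "b \<in> CP1 q" and x: "x \<in> TF"
  have i2: "(\<lambda>(m, n). (m, ract N n b)) ` (carr M \<times> carr N) \<subseteq> carr M \<times> carr N" using b by (auto simp: clN_r)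
  have i1: "(\<lambda>(m, n). (m, ract N n b)) ` Poly_Mapping.keys x \<subseteq> (\<lambda>(m, n). (m, ract N n b)) ` (carr M \<times> carr N)"
    using x by (intro image_mono) (simp add: tfree_def)
  show ?thesis unfolding tfree_def mem_Collect_eq
    by (rule order_trans[OF keys_push order_trans[OF i1 i2]])
qed

lemma lact_T: "b \<in> CP1 q \<Longrightarrow> x \<in> TF \<Longrightarrow>
   lact TT b (tc x) = tc (push (\<lambda>(m, n). (lact M b m, n)) x)"
  unfolding tensor_def bimod.simps
proof (intro UN_const ballI)
  fix x' assume b: "b \<in> CP1 q" and "x' \<in> tc x"
  then have "x' - x \<in> TR" using tc_memD by blast
  then have "push (\<lambda>(m, n). (lact M b m, n)) (x' - x) \<in> TR" by (rule pushL_TR[OF _ b])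
  then show "tc (push (\<lambda>(m, n). (lact M b m, n)) x') = tc (push (\<lambda>(m, n). (lact M b m, n)) x)"
    by (intro tc_eqI) (simp add: push_diff)
qed (use tc_self in auto)

lemma ract_T: "b \<in> CP1 q \<Longrightarrow> x \<in> TF \<Longrightarrow>
   ract TT (tc x) b = tc (push (\<lambda>(m, n). (m, ract N n b)) x)"
  unfolding tensor_def bimod.simps
proof (intro UN_const ballI)
  fix x' assume b: "b \<in> CP1 q" and "x' \<in> tc x"
  then have "x' - x \<in> TR" using tc_memD by blast
  then have "push (\<lambda>(m, n). (m, ract N n b)) (x' - x) \<in> TR" by (rule pushR_TR[OF _ b])
  then show "tc (push (\<lambda>(m, n). (m, ract N n b)) x') = tc (push (\<lambda>(m, n). (m, ract N n b)) x)"
    by (intro tc_eqI) (simp add: push_diff)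
qed (use tc_self in auto)

lemma Fr_push: "Fr (push f x) = lin (\<lambda>p. G (f p)) x"
  by (simp add: Fr_def push_fe lin_frag_extend lin_single)

lemma Phi_lact: "b \<in> CP1 q \<Longrightarrow> x \<in> TF \<Longrightarrow> Phi (lact TT b (tc x)) = mulA q b (Phi (tc x))"
proof -
  assume b: "b \<in> CP1 q" and x: "x \<in> TF"
  have rb: "cls q (rep q b) = b" using b Ln_rep CP1_def by blast
  have "lin (\<lambda>p. G ((\<lambda>(m, n). (lact M b m, n)) p)) x - lin (\<lambda>p. rep q b * G p) x \<in> II"
  proof (rule lin_cong_I)
    fix p assume "p \<in> Poly_Mapping.keys x"
    then obtain m n where p: "p = (m, n)" "m \<in> carr M" "n \<in> carr N" using x by (auto simp: tfree_def)
    have "cls q (rep q b * rep q (eM m)) = mulA q (cls q (rep q b)) (cls q (rep q (eM m)))" by simp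
    also have "\<dots> = eM (lact M b m)"
      using b p rb Ln_rep[OF eM_in[OF p(2)]] by (simp add: eM_l)
    finally have "cls q (rep q b * rep q (eM m)) = eM (lact M b m)" .
    then have "rep q (eM (lact M b m)) - rep q b * rep q (eM m) \<in> II"
      using rep_mod eM_in clM_l b p by blast
    then have "(rep q (eM (lact M b m)) - rep q b * rep q (eM m)) * rep q (eN n) \<in> II" by (rule I_rm)
    then show "G ((\<lambda>(m, n). (lact M b m, n)) p) - rep q b * G p \<in> II"
      by (simp add: p G_def algebra_simps)
  qed
  then have "cls q (Fr (push (\<lambda>(m, n). (lact M b m, n)) x)) = cls q (rep q b * Fr x)"
    unfolding Fr_push cls_eq by (simp add: Fr_def lin_lmult)
  then show ?thesis using b x rb
    by (simp add: lact_T Phi_tc pushL_TF) (metis mul_cls)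
qed

lemma Phi_ract: "b \<in> CP1 q \<Longrightarrow> x \<in> TF \<Longrightarrow> Phi (ract TT (tc x) b) = mulA q (Phi (tc x)) b"
proof -
  assume b: "b \<in> CP1 q" and x: "x \<in> TF"
  have rb: "cls q (rep q b) = b" using b Ln_rep CP1_def by blast
  have "lin (\<lambda>p. G ((\<lambda>(m, n). (m, ract N n b)) p)) x - lin (\<lambda>p. G p * rep q b) x \<in> II"
  proof (rule lin_cong_I)
    fix p assume "p \<in> Poly_Mapping.keys x"
    then obtain m n where p: "p = (m, n)" "m \<in> carr M" "n \<in> carr N" using x by (auto simp: tfree_def)
    have "cls q (rep q (eN n) * rep q b) = mulA q (cls q (rep q (eN n))) (cls q (rep q b))" by simp
    also have "\<dots> = eN (ract N n b)"
      using b p rb Ln_rep[OF eN_in[OF p(3)]] by (simp add: eN_r)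
    finally have "cls q (rep q (eN n) * rep q b) = eN (ract N n b)" .
    then have "rep q (eN (ract N n b)) - rep q (eN n) * rep q b \<in> II"
      using rep_mod eN_in clN_r b p by blast
    then have "rep q (eM m) * (rep q (eN (ract N n b)) - rep q (eN n) * rep q b) \<in> II" by (rule I_lm)
    then show "G ((\<lambda>(m, n). (m, ract N n b)) p) - G p * rep q b \<in> II"
      by (simp add: p G_def algebra_simps)
  qed
  then have "cls q (Fr (push (\<lambda>(m, n). (m, ract N n b)) x)) = cls q (Fr x * rep q b)"
    unfolding Fr_push cls_eq by (simp add: Fr_def lin_rmult)
  then show ?thesis using b x rb
    by (simp add: ract_T Phi_tc pushR_TF) (metis mul_cls)
qed

end

context tens begin

definition ps :: "(falg \<times> falg) list" where
  "ps = (SOME ps. (\<forall>(u, v)\<in>set ps. hom (- l) u \<and> hom l v) \<and> T ps - 1 \<in> II)"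

lemma ps: "(\<forall>(u, v)\<in>set ps. hom (- l) u \<and> hom l v) \<and> T ps - 1 \<in> II"
proof -
  have "\<exists>ps. (\<forall>(u, v)\<in>set ps. hom (- l) u \<and> hom l v) \<and> T ps - 1 \<in> II"
    using SG_all[of l] unfolding SG_def .
  then show ?thesis unfolding ps_def by (rule someI_ex)
qed

lemma ps_hom: "(u, v) \<in> set ps \<Longrightarrow> hom (- l) u \<and> hom l v"
  using ps by blast

abbreviation "CC \<equiv> carr M \<times> carr N"

lemma hom_Fru: "Poly_Mapping.keys w \<subseteq> CC \<Longrightarrow> hom (- l) u \<Longrightarrow> hom k (Fr w * u)"
proof -
  assume a: "Poly_Mapping.keys w \<subseteq> CC" and b: "hom (- l) u"
  have "hom (k + l + - l) (Fr w * u)" by (rule hom_mult[OF hom_Fr[OF a] b])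
  then show ?thesis by simp
qed

definition R :: "('m \<times> 'n \<Rightarrow>\<^sub>0 int) \<Rightarrow> ('m \<times> 'n \<Rightarrow>\<^sub>0 int)" where
  "R w = sum_list (map (\<lambda>(u, v). frag_of (eMi (cls q (Fr w * u)), eNi (cls q v))) ps)"

lemma R_I: "Fr w \<in> II \<Longrightarrow> R w \<in> TR"
  unfolding R_def
proof (rule trel_sum_list)
  fix p assume w: "Fr w \<in> II" and p: "p \<in> set ps"
  obtain u v where uv: "p = (u, v)" by (cases p)
  have "cls q (Fr w * u) = cls q 0" using I_rm[OF w] by (simp add: cls_eq)
  moreover have "eNi (cls q v) \<in> carr N" using ps_hom p uv Ln_cls eNi_in by blast
  ultimately show "(case p of (u, v) \<Rightarrow> frag_of (eMi (cls q (Fr w * u)), eNi (cls q v))) \<in> TR"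
    using TR_zeroM uv by simp
qed

lemma R_diff: "Poly_Mapping.keys a \<subseteq> CC \<Longrightarrow> Poly_Mapping.keys b \<subseteq> CC \<Longrightarrow>
   R (a - b) - R a + R b \<in> TR"
proof -
  assume a: "Poly_Mapping.keys a \<subseteq> CC" and b: "Poly_Mapping.keys b \<subseteq> CC"
  let ?F = "\<lambda>w (u, v). frag_of (eMi (cls q (Fr w * u)), eNi (cls q v))"
  have "R (a - b) - R a + R b = sum_list (map (\<lambda>p. ?F (a - b) p - ?F a p + ?F b p) ps)"
    unfolding R_def sum_list_3 ..
  also have "\<dots> \<in> TR"
  proof (rule trel_sum_list)
    fix p assume p: "p \<in> set ps"
    obtain u v where uv: "p = (u, v)" by (cases p)
    have hu: "hom (- l) u" and hv: "hom l v" using ps_hom p uv by auto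
    let ?al = "Fr a * u" and ?be = "Fr b * u"
    have ha: "hom k ?al" and hb: "hom k ?be" using hom_Fru a b hu by auto
    have hd: "hom k (?al - ?be)" using hom_diff[OF ha hb] .
    have e: "Fr (a - b) * u = ?al - ?be" by (simp add: Fr_def lin_diff algebra_simps)
    let ?mD = "eMi (cls q (?al - ?be))" and ?mB = "eMi (cls q ?be)" and ?mA = "eMi (cls q ?al)"
      and ?n = "eNi (cls q v)"
    have mD: "?mD \<in> carr M" and mB: "?mB \<in> carr M" using eMi_in Ln_cls hb hd by blast+
    have n: "?n \<in> carr N" using eNi_in Ln_cls hv by blast
    have "badd M ?mD ?mB = ?mA"
    proof (rule eMi_char[symmetric])
      show "badd M ?mD ?mB \<in> carr M" using mD mB clM_add by blast
      show "eM (badd M ?mD ?mB) = cls q ?al"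
        using mD mB hb hd by (simp add: eM_add eM_eMi Ln_cls)
    qed
    then have "frag_of (?mA, ?n) - frag_of (?mD, ?n) - frag_of (?mB, ?n) \<in> TR"
      using trel.addl[OF mD mB n, of "CP1 q"] by simp
    then have "- (frag_of (?mA, ?n) - frag_of (?mD, ?n) - frag_of (?mB, ?n)) \<in> TR" by (rule trel.neg)
    then show "?F (a - b) p - ?F a p + ?F b p \<in> TR"
      by (simp add: uv e algebra_simps)
  qed
  finally show ?thesis .
qed

lemma T_mult: "sum_list (map (\<lambda>(u, v). y * u * v) xs) = y * T xs"
  by (induction xs) (auto simp: T_def algebra_simps)

lemma addr_list:
  assumes m: "m \<in> carr M" and y: "hom l y"
    and xs: "\<And>u v. (u, v) \<in> set xs \<Longrightarrow> hom (- l) u \<and> hom l v"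
  shows "sum_list (map (\<lambda>(u, v). frag_of (m, eNi (cls q (y * u * v)))) xs)
          - frag_of (m, eNi (cls q (y * T xs))) \<in> TR"
  using xs
proof (induction xs)
  case Nil
  then show ?case using TR_zeroN[OF m] trel.neg by (fastforce simp: T_def)
next
  case (Cons p xs)
  obtain u v where uv: "p = (u, v)" by (cases p)
  have hu: "hom (- l) u" and hv: "hom l v" using Cons(2) uv by auto
  have IH: "sum_list (map (\<lambda>(u, v). frag_of (m, eNi (cls q (y * u * v)))) xs)
          - frag_of (m, eNi (cls q (y * T xs))) \<in> TR" using Cons by auto
  have hT: "hom 0 (T xs)" unfolding T_def
  proof (rule hom_sum_list)
    fix t assume "t \<in> set (map (\<lambda>(u, v). u * v) xs)"
    then obtain u' v' where t: "t = u' * v'" "(u', v') \<in> set xs" by auto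
    then have "hom (- l) u'" "hom l v'" using Cons(2) by auto
    from hom_mult[OF this] show "hom 0 t" using t by simp
  qed
  have h1: "hom l (y * u * v)" using hom_mult[OF hom_mult[OF y hu] hv] by simp
  have h2: "hom l (y * T xs)" using hom_mult[OF y hT] by simp
  let ?n1 = "eNi (cls q (y * u * v))" and ?n2 = "eNi (cls q (y * T xs))"
  have n1: "?n1 \<in> carr N" and n2: "?n2 \<in> carr N" using eNi_in Ln_cls h1 h2 by blast+
  have "badd N ?n1 ?n2 = eNi (cls q (y * T (p # xs)))"
  proof (rule eNi_char[symmetric])
    show "badd N ?n1 ?n2 \<in> carr N" using n1 n2 clN_add by blast
    show "eN (badd N ?n1 ?n2) = cls q (y * T (p # xs))"
      using n1 n2 h1 h2 by (simp add: eN_add eN_eNi Ln_cls uv T_def algebra_simps)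
  qed
  then have "frag_of (m, eNi (cls q (y * T (p # xs)))) - frag_of (m, ?n1) - frag_of (m, ?n2) \<in> TR"
    using trel.addr[OF m n1 n2, of "CP1 q"] by simp
  from trel_diff[OF IH this] show ?case by (simp add: uv algebra_simps)
qed

lemma R_single: "p \<in> CC \<Longrightarrow> R (frag_of p) - frag_of p \<in> TR"
proof -
  assume "p \<in> CC"
  then obtain m n where p: "p = (m, n)" and m: "m \<in> carr M" and n: "n \<in> carr N" by auto
  let ?x = "rep q (eM m)" and ?y = "rep q (eN n)"
  have cx: "cls q ?x = eM m" and hx: "hom k ?x" using Ln_rep[OF eM_in[OF m]] by auto
  have cy: "cls q ?y = eN n" and hy: "hom l ?y" using Ln_rep[OF eN_in[OF n]] by auto
  have Fp: "Fr (frag_of p) = ?x * ?y" by (simp add: Fr_def lin_single G_def p)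
  let ?S = "sum_list (map (\<lambda>(u, v). frag_of (m, eNi (cls q (?y * u * v)))) ps)"
  have step1: "R (frag_of p) - ?S \<in> TR"
  proof -
    have "R (frag_of p) - ?S = sum_list (map (\<lambda>pp. (case pp of (u, v) \<Rightarrow> frag_of (eMi (cls q (?x * ?y * u)), eNi (cls q v)))
            - (case pp of (u, v) \<Rightarrow> frag_of (m, eNi (cls q (?y * u * v))))) ps)"
      unfolding R_def Fp sum_list_2 ..
    also have "\<dots> \<in> TR"
    proof (rule trel_sum_list)
      fix pp assume pp: "pp \<in> set ps"
      obtain u v where uv: "pp = (u, v)" by (cases pp)
      have hu: "hom (- l) u" and hv: "hom l v" using ps_hom pp uv by auto
      let ?b = "cls q (?y * u)" and ?nv = "eNi (cls q v)"
      have b: "?b \<in> CP1 q" unfolding CP1_def using Ln_cls hom_mult[OF hy hu] by simp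
      have nv: "?nv \<in> carr N" using eNi_in Ln_cls hv by blast
      have e1: "eMi (cls q (?x * ?y * u)) = ract M m ?b"
      proof (rule eMi_char)
        show "ract M m ?b \<in> carr M" using clM_r b m by blast
        have "eM (ract M m ?b) = mulA q (eM m) ?b" using b m by (simp add: eM_r)
        also have "\<dots> = mulA q (cls q ?x) ?b" by (simp only: cx)
        finally show "eM (ract M m ?b) = cls q (?x * ?y * u)" by (simp add: mult.assoc)
      qed
      have e2: "lact N ?b ?nv = eNi (cls q (?y * u * v))"
      proof (rule eNi_char[symmetric])
        show "lact N ?b ?nv \<in> carr N" using clN_l b nv by blast
        show "eN (lact N ?b ?nv) = cls q (?y * u * v)"
          using b nv hv by (simp add: eN_l eN_eNi Ln_cls)
      qed
      have "frag_of (ract M m ?b, ?nv) - frag_of (m, lact N ?b ?nv) \<in> TR"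
        by (rule trel.bal[OF m b nv])
      then show "(case pp of (u, v) \<Rightarrow> frag_of (eMi (cls q (?x * ?y * u)), eNi (cls q v)))
            - (case pp of (u, v) \<Rightarrow> frag_of (m, eNi (cls q (?y * u * v)))) \<in> TR"
        by (simp add: uv e1 e2)
    qed
    finally show ?thesis .
  qed
  have step2: "?S - frag_of (m, eNi (cls q (?y * T ps))) \<in> TR"
    by (rule addr_list[OF m hy]) (use ps_hom in auto)
  have "?y * T ps - ?y \<in> II"
    using I_lm[OF ps[THEN conjunct2], of ?y] by (simp add: algebra_simps)
  then have "cls q (?y * T ps) = cls q ?y" by (simp only: cls_eq)
  then have "cls q (?y * T ps) = eN n" using cy by simp
  then have "eNi (cls q (?y * T ps)) = n" using eNi_char[OF n] by simp
  with step2 have "?S - frag_of (m, n) \<in> TR" by simp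
  with step1 have "(R (frag_of p) - ?S) + (?S - frag_of (m, n)) \<in> TR"
    by (rule trel.add)
  then show ?thesis by (simp add: p)
qed

lemma KL: "Poly_Mapping.keys w \<subseteq> CC \<Longrightarrow> R w - w \<in> TR"
proof -
  assume "Poly_Mapping.keys w \<subseteq> CC"
  then have "Poly_Mapping.keys w \<subseteq> CC \<and> R w - w \<in> TR"
  proof (induction w rule: frag_induction)
    case zero
    then show ?case using R_I[of 0] by (simp add: Fr_def suq_ideal.zero)
  next
    case (one x)
    then show ?case using R_single by auto
  next
    case (diff a b)
    then have k: "Poly_Mapping.keys (a - b) \<subseteq> CC" using keys_diff[of a b] by blast
    have t1: "R (a - b) - R a + R b \<in> TR" using diff R_diff by blast
    have "R a - a \<in> TR" "R b - b \<in> TR" using diff by auto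
    then have t2: "(R a - a) - (R b - b) \<in> TR" by (rule trel_diff)
    have "(R (a - b) - R a + R b) + ((R a - a) - (R b - b)) \<in> TR"
      by (rule trel.add[OF t1 t2])
    then show ?case using k by (simp add: algebra_simps)
  qed
  then show ?thesis by blast
qed

lemma Phi_inj: "x \<in> TF \<Longrightarrow> y \<in> TF \<Longrightarrow> cls q (Fr x) = cls q (Fr y) \<Longrightarrow> tc x = tc y"
proof -
  assume x: "x \<in> TF" and y: "y \<in> TF" and e: "cls q (Fr x) = cls q (Fr y)"
  let ?w = "x - y"
  have kw: "Poly_Mapping.keys ?w \<subseteq> CC" using TF_diff[OF x y] by (simp add: tfree_def)
  have "Fr ?w \<in> II" using e by (simp add: cls_eq Fr_def lin_diff)
  then have "R ?w \<in> TR" by (rule R_I)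
  from trel_diff[OF this KL[OF kw]] have "?w \<in> TR" by simp
  then show ?thesis by (rule tc_eqI)
qed

lemma Phi_surj: "Z \<in> Ln q (k + l) \<Longrightarrow> \<exists>x\<in>TF. cls q (Fr x) = Z"
proof -
  assume Z: "Z \<in> Ln q (k + l)"
  let ?z = "rep q Z"
  have cz: "cls q ?z = Z" and hz: "hom (k + l) ?z" using Ln_rep[OF Z] by auto
  let ?f = "\<lambda>(u, v). frag_of (eMi (cls q (?z * u)), eNi (cls q v))"
  let ?x = "sum_list (map ?f ps)"
  have huv: "hom k (?z * u) \<and> hom l v" if "(u, v) \<in> set ps" for u v
  proof -
    have "hom (- l) u" "hom l v" using ps_hom[OF that] by auto
    moreover from hom_mult[OF hz this(1)] have "hom k (?z * u)" by simp
    ultimately show ?thesis by simp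
  qed
  have "?x \<in> TF"
  proof -
    have "Poly_Mapping.keys (?f p) \<subseteq> CC" if "p \<in> set ps" for p
    proof -
      obtain u v where uv: "p = (u, v)" by (cases p)
      have "hom k (?z * u)" "hom l v" using huv that uv by auto
      then have "eMi (cls q (?z * u)) \<in> carr M" "eNi (cls q v) \<in> carr N"
        using eMi_in eNi_in Ln_cls by blast+
      then show ?thesis by (simp add: uv)
    qed
    then show ?thesis using keys_sum_list[of ?f ps] by (auto simp: tfree_def)
  qed
  moreover have "cls q (Fr ?x) = Z"
  proof -
    have "Fr ?x - sum_list (map (\<lambda>(u, v). ?z * u * v) ps)
        = sum_list (map (\<lambda>p. Fr (?f p) - (case p of (u, v) \<Rightarrow> ?z * u * v)) ps)"
      by (simp add: Fr_def lin_sum_list sum_list_2)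
    also have "\<dots> \<in> II"
    proof (rule I_sum_list)
      fix p assume p: "p \<in> set ps"
      obtain u v where uv: "p = (u, v)" by (cases p)
      have h: "hom k (?z * u)" "hom l v" using huv p uv by auto
      have r1: "rep q (cls q (?z * u)) - ?z * u \<in> II" using rep_mod Ln_cls h(1) by blast
      have r2: "rep q (cls q v) - v \<in> II" using rep_mod Ln_cls h(2) by blast
      have "(rep q (cls q (?z * u)) - ?z * u) * rep q (cls q v) + ?z * u * (rep q (cls q v) - v) \<in> II"
        by (intro suq_ideal.add I_rm I_lm r1 r2)
      then show "Fr (?f p) - (case p of (u, v) \<Rightarrow> ?z * u * v) \<in> II"
        using h by (simp add: uv Fr_def lin_single G_def eM_eMi eN_eNi Ln_cls algebra_simps)
    qed
    finally have a: "Fr ?x - ?z * T ps \<in> II" by (simp only: T_mult)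
    have "?z * T ps - ?z \<in> II"
      using I_lm[OF ps[THEN conjunct2], of ?z] by (simp add: algebra_simps)
    from I_trans[OF a this] show ?thesis using cz by (simp add: cls_eq[symmetric])
  qed
  ultimately show ?thesis by blast
qed

theorem main_iso: "bimod_iso (CP1 q) TT (Lmod q (k + l)) Phi"
  unfolding bimod_iso_def
proof (intro conjI ballI)
  show "bij_betw Phi (carr TT) (carr (Lmod q (k + l)))"
    unfolding bij_betw_def
  proof
    show "inj_on Phi (carr TT)"
      unfolding carrT inj_on_def by (auto simp: Phi_tc dest: Phi_inj)
    show "Phi ` carr TT = carr (Lmod q (k + l))"
    proof
      show "Phi ` carr TT \<subseteq> carr (Lmod q (k + l))"
        using hom_Fr by (auto simp: carrT Lmod_def Phi_tc Ln_cls tfree_def)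
      show "carr (Lmod q (k + l)) \<subseteq> Phi ` carr TT"
      proof
        fix Z assume "Z \<in> carr (Lmod q (k + l))"
        then obtain x where "x \<in> TF" "cls q (Fr x) = Z" using Phi_surj by (auto simp: Lmod_def)
        then have "Phi (tc x) = Z" "tc x \<in> carr TT" by (auto simp: carrT Phi_tc)
        then show "Z \<in> Phi ` carr TT" by (metis imageI)
      qed
    qed
  qed
next
  fix X Y assume "X \<in> carr TT" "Y \<in> carr TT"
  then obtain x y where "x \<in> TF" "y \<in> TF" "X = tc x" "Y = tc y" by (auto simp: carrT)
  then show "Phi (badd TT X Y) = badd (Lmod q (k + l)) (Phi X) (Phi Y)"
    by (simp add: badd_T Phi_tc TF_add Lmod_def Fr_def lin_add)
next
  fix b X assume "b \<in> CP1 q" "X \<in> carr TT"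
  then show "Phi (lact TT b X) = lact (Lmod q (k + l)) b (Phi X)"
    by (auto simp: carrT Lmod_def Phi_lact)
next
  fix b X assume "b \<in> CP1 q" "X \<in> carr TT"
  then show "Phi (ract TT X b) = ract (Lmod q (k + l)) (Phi X) b"
    by (auto simp: carrT Lmod_def Phi_ract)
qed

lemma clT_add: "X \<in> carr TT \<Longrightarrow> Y \<in> carr TT \<Longrightarrow> badd TT X Y \<in> carr TT"
  by (auto simp: carrT badd_T TF_add)
lemma clT_l: "b \<in> CP1 q \<Longrightarrow> X \<in> carr TT \<Longrightarrow> lact TT b X \<in> carr TT"
  by (auto simp: carrT lact_T pushL_TF)
lemma clT_r: "b \<in> CP1 q \<Longrightarrow> X \<in> carr TT \<Longrightarrow> ract TT X b \<in> carr TT"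
  by (auto simp: carrT ract_T pushR_TF)

end

lemma iso_comp:
  assumes f: "bimod_iso B M N f" and g: "bimod_iso B N P g"
  shows "bimod_iso B M P (g \<circ> f)"
proof -
  have bf: "bij_betw f (carr M) (carr N)" and bg: "bij_betw g (carr N) (carr P)"
    using f g by (auto simp: bimod_iso_def)
  have fin: "\<And>x. x \<in> carr M \<Longrightarrow> f x \<in> carr N" using bf bij_betw_apply by metis
  show ?thesis unfolding bimod_iso_def
  proof (intro conjI ballI)
    show "bij_betw (g \<circ> f) (carr M) (carr P)" using bf bg by (rule bij_betw_trans)
  next
    fix x y assume "x \<in> carr M" "y \<in> carr M"
    then show "(g \<circ> f) (badd M x y) = badd P ((g \<circ> f) x) ((g \<circ> f) y)"
      using f g fin by (simp add: bimod_iso_def)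
  next
    fix b x assume "b \<in> B" "x \<in> carr M"
    then show "(g \<circ> f) (lact M b x) = lact P b ((g \<circ> f) x)"
      using f g fin by (simp add: bimod_iso_def)
  next
    fix b x assume "b \<in> B" "x \<in> carr M"
    then show "(g \<circ> f) (ract M x b) = ract P ((g \<circ> f) x) b"
      using f g fin by (simp add: bimod_iso_def)
  qed
qed

lemma iso_inv:
  assumes f: "bimod_iso B M N f"
    and c1: "\<And>x y. x \<in> carr M \<Longrightarrow> y \<in> carr M \<Longrightarrow> badd M x y \<in> carr M"
    and c2: "\<And>b x. b \<in> B \<Longrightarrow> x \<in> carr M \<Longrightarrow> lact M b x \<in> carr M"
    and c3: "\<And>b x. b \<in> B \<Longrightarrow> x \<in> carr M \<Longrightarrow> ract M x b \<in> carr M"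
  shows "bimod_iso B N M (inv_into (carr M) f)"
proof -
  let ?g = "inv_into (carr M) f"
  have bf: "bij_betw f (carr M) (carr N)" using f by (simp add: bimod_iso_def)
  have inj: "inj_on f (carr M)" and im: "f ` carr M = carr N" using bf by (auto simp: bij_betw_def)
  have gin: "\<And>x. x \<in> carr N \<Longrightarrow> ?g x \<in> carr M" using im by (metis inv_into_into)
  have fg: "\<And>x. x \<in> carr N \<Longrightarrow> f (?g x) = x" using im by (metis f_inv_into_f)
  have gf: "\<And>x. x \<in> carr M \<Longrightarrow> ?g (f x) = x" using inj by (rule inv_into_f_f)
  have fadd: "\<And>x y. x \<in> carr M \<Longrightarrow> y \<in> carr M \<Longrightarrow> f (badd M x y) = badd N (f x) (f y)"
   and fl: "\<And>b x. b \<in> B \<Longrightarrow> x \<in> carr M \<Longrightarrow> f (lact M b x) = lact N b (f x)"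
   and fr: "\<And>b x. b \<in> B \<Longrightarrow> x \<in> carr M \<Longrightarrow> f (ract M x b) = ract N (f x) b"
    using f by (auto simp: bimod_iso_def)
  show ?thesis unfolding bimod_iso_def
  proof (intro conjI ballI)
    show "bij_betw ?g (carr N) (carr M)" using bf by (rule bij_betw_inv_into)
  next
    fix x y assume x: "x \<in> carr N" and y: "y \<in> carr N"
    have "?g (badd N x y) = ?g (f (badd M (?g x) (?g y)))"
      using x y by (simp add: fadd gin fg)
    also have "\<dots> = badd M (?g x) (?g y)" using x y by (intro gf c1 gin)
    finally show "?g (badd N x y) = badd M (?g x) (?g y)" .
  next
    fix b x assume b: "b \<in> B" and x: "x \<in> carr N"
    have "?g (lact N b x) = ?g (f (lact M b (?g x)))"
      using b x by (simp add: fl gin fg)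
    also have "\<dots> = lact M b (?g x)" using b x by (intro gf c2 gin)
    finally show "?g (lact N b x) = lact M b (?g x)" .
  next
    fix b x assume b: "b \<in> B" and x: "x \<in> carr N"
    have "?g (ract N x b) = ?g (f (ract M (?g x) b))"
      using b x by (simp add: fr gin fg)
    also have "\<dots> = ract M (?g x) b" using b x by (intro gf c3 gin)
    finally show "?g (ract N x b) = ract M (?g x) b" .
  qed
qed

context suq begin

lemma qne: "q \<noteq> 0" using qpos by simp
lemma zeroA_Asu: "zeroA q \<in> Asu q" by (simp add: zeroA_def Asu_def)
lemma smul_one: "X \<in> Asu q \<Longrightarrow> smulA q 1 X = X"
  by (auto simp: Asu_def)
lemma CP1_Asu: "b \<in> CP1 q \<Longrightarrow> b \<in> Asu q" by (simp add: CP1_def Ln_def)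
lemma zeroA_add: "addA q (zeroA q) (zeroA q) = zeroA q" by (simp add: zeroA_def)
lemma zeroA_lm: "b \<in> Asu q \<Longrightarrow> mulA q b (zeroA q) = zeroA q" by (auto simp: zeroA_def Asu_def)
lemma zeroA_rm: "b \<in> Asu q \<Longrightarrow> mulA q (zeroA q) b = zeroA q" by (auto simp: zeroA_def Asu_def)
lemma Ln_mul0: "b \<in> CP1 q \<Longrightarrow> X \<in> Ln q j \<Longrightarrow> mulA q b X \<in> Ln q j"
  using Ln_mul[of b 0 X j] by (simp add: CP1_def)
lemma Ln_mul0r: "b \<in> CP1 q \<Longrightarrow> X \<in> Ln q j \<Longrightarrow> mulA q X b \<in> Ln q j"
  using Ln_mul[of X j b 0] by (simp add: CP1_def)

lemma Lmod_tensorable: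
  "bimod_iso (CP1 q) (Lmod q n) (Lmod q n) id"
  "\<And>x y. x \<in> carr (Lmod q n) \<Longrightarrow> y \<in> carr (Lmod q n) \<Longrightarrow> badd (Lmod q n) x y \<in> carr (Lmod q n)"
  "\<And>b x. b \<in> CP1 q \<Longrightarrow> x \<in> carr (Lmod q n) \<Longrightarrow> lact (Lmod q n) b x \<in> carr (Lmod q n)"
  "\<And>b x. b \<in> CP1 q \<Longrightarrow> x \<in> carr (Lmod q n) \<Longrightarrow> ract (Lmod q n) x b \<in> carr (Lmod q n)"
  by (auto simp: bimod_iso_def Lmod_def Ln_add Ln_mul0 Ln_mul0r)

definition e01 :: "oelt \<Rightarrow> aelt" where "e01 u = fst (snd u)"
definition e10 :: "oelt \<Rightarrow> aelt" where "e10 u = fst u"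

lemma Ln_mulA_Asu: "X \<in> Asu q \<Longrightarrow> Y \<in> Asu q \<Longrightarrow> mulA q X Y \<in> Asu q"
  by (auto simp: Asu_def)

lemma Om01_tensorable:
  "bimod_iso (CP1 q) (Om01 q) (Lmod q (-2)) e01"
  "\<And>x y. x \<in> carr (Om01 q) \<Longrightarrow> y \<in> carr (Om01 q) \<Longrightarrow> badd (Om01 q) x y \<in> carr (Om01 q)"
  "\<And>b x. b \<in> CP1 q \<Longrightarrow> x \<in> carr (Om01 q) \<Longrightarrow> lact (Om01 q) b x \<in> carr (Om01 q)"
  "\<And>b x. b \<in> CP1 q \<Longrightarrow> x \<in> carr (Om01 q) \<Longrightarrow> ract (Om01 q) x b \<in> carr (Om01 q)"
proof -
  have bij: "bij_betw e01 (carr (Om01 q)) (Ln q (-2))"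
    unfolding bij_betw_def inj_on_def by (auto simp: Om01_def e01_def image_def)
  show "bimod_iso (CP1 q) (Om01 q) (Lmod q (-2)) e01"
    unfolding bimod_iso_def using bij
    by (auto simp: Om01_def Lmod_def e01_def om_add_def om_lact_def om_ract_hom_def
        smul_one Ln_mulA_Asu CP1_Asu Ln_Asu qne)
  show "\<And>x y. x \<in> carr (Om01 q) \<Longrightarrow> y \<in> carr (Om01 q) \<Longrightarrow> badd (Om01 q) x y \<in> carr (Om01 q)"
    by (auto simp: Om01_def om_add_def zeroA_add Ln_add)
  show "\<And>b x. b \<in> CP1 q \<Longrightarrow> x \<in> carr (Om01 q) \<Longrightarrow> lact (Om01 q) b x \<in> carr (Om01 q)"
    by (auto simp: Om01_def om_lact_def zeroA_lm CP1_Asu Ln_mul0)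
  show "\<And>b x. b \<in> CP1 q \<Longrightarrow> x \<in> carr (Om01 q) \<Longrightarrow> ract (Om01 q) x b \<in> carr (Om01 q)"
    by (auto simp: Om01_def om_ract_hom_def zeroA_rm CP1_Asu Ln_mul0r smul_one Ln_mulA_Asu Ln_Asu qne zeroA_Asu)
qed

lemma Om10_tensorable:
  "bimod_iso (CP1 q) (Om10 q) (Lmod q 2) e10"
  "\<And>x y. x \<in> carr (Om10 q) \<Longrightarrow> y \<in> carr (Om10 q) \<Longrightarrow> badd (Om10 q) x y \<in> carr (Om10 q)"
  "\<And>b x. b \<in> CP1 q \<Longrightarrow> x \<in> carr (Om10 q) \<Longrightarrow> lact (Om10 q) b x \<in> carr (Om10 q)"
  "\<And>b x. b \<in> CP1 q \<Longrightarrow> x \<in> carr (Om10 q) \<Longrightarrow> ract (Om10 q) x b \<in> carr (Om10 q)"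
proof -
  have bij: "bij_betw e10 (carr (Om10 q)) (Ln q 2)"
    unfolding bij_betw_def inj_on_def by (auto simp: Om10_def e10_def image_def)
  show "bimod_iso (CP1 q) (Om10 q) (Lmod q 2) e10"
    unfolding bimod_iso_def using bij
    by (auto simp: Om10_def Lmod_def e10_def om_add_def om_lact_def om_ract_hom_def
        smul_one Ln_mulA_Asu CP1_Asu Ln_Asu qne)
  show "\<And>x y. x \<in> carr (Om10 q) \<Longrightarrow> y \<in> carr (Om10 q) \<Longrightarrow> badd (Om10 q) x y \<in> carr (Om10 q)"
    by (auto simp: Om10_def om_add_def zeroA_add Ln_add)
  show "\<And>b x. b \<in> CP1 q \<Longrightarrow> x \<in> carr (Om10 q) \<Longrightarrow> lact (Om10 q) b x \<in> carr (Om10 q)"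
    by (auto simp: Om10_def om_lact_def zeroA_lm CP1_Asu Ln_mul0)
  show "\<And>b x. b \<in> CP1 q \<Longrightarrow> x \<in> carr (Om10 q) \<Longrightarrow> ract (Om10 q) x b \<in> carr (Om10 q)"
    by (auto simp: Om10_def om_ract_hom_def zeroA_rm CP1_Asu Ln_mul0r smul_one Ln_mulA_Asu Ln_Asu qne zeroA_Asu)
qed

lemma swap_iso:
  assumes isoA: "bimod_iso (CP1 q) A (Lmod q j) eA"
    and A1: "\<And>x y. x \<in> carr A \<Longrightarrow> y \<in> carr A \<Longrightarrow> badd A x y \<in> carr A"
    and A2: "\<And>b x. b \<in> CP1 q \<Longrightarrow> x \<in> carr A \<Longrightarrow> lact A b x \<in> carr A"
    and A3: "\<And>b x. b \<in> CP1 q \<Longrightarrow> x \<in> carr A \<Longrightarrow> ract A x b \<in> carr A"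
  shows "\<exists>\<Phi>. bimod_iso (CP1 q) (tensor (CP1 q) (Lmod q n) A) (tensor (CP1 q) A (Lmod q n)) \<Phi>"
proof -
  interpret t1: tens q "Lmod q n" A id eA n j
    by (unfold_locales) (use Lmod_tensorable isoA A1 A2 A3 in auto)
  interpret t2: tens q A "Lmod q n" eA id j n
    by (unfold_locales) (use Lmod_tensorable isoA A1 A2 A3 in auto)
  have i1: "bimod_iso (CP1 q) (tensor (CP1 q) (Lmod q n) A) (Lmod q (n + j)) t1.Phi"
    by (rule t1.main_iso)
  have "bimod_iso (CP1 q) (Lmod q (j + n)) (tensor (CP1 q) A (Lmod q n))
          (inv_into (carr (tensor (CP1 q) A (Lmod q n))) t2.Phi)"
    by (rule iso_inv[OF t2.main_iso t2.clT_add t2.clT_l t2.clT_r])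
  then have i2: "bimod_iso (CP1 q) (Lmod q (n + j)) (tensor (CP1 q) A (Lmod q n))
          (inv_into (carr (tensor (CP1 q) A (Lmod q n))) t2.Phi)"
    by (simp add: add.commute)
  show ?thesis using iso_comp[OF i1 i2] by blast
qed

end

theorem lemma3p6:
  fixes q :: real
  assumes "0 < q" and "q < 1"
  shows "\<forall>n::int.
    (\<exists>\<Phi>. bimod_iso (CP1 q) (tensor (CP1 q) (Lmod q n) (Om01 q))
                            (tensor (CP1 q) (Om01 q) (Lmod q n)) \<Phi>) \<and>
    (\<exists>\<Psi>. bimod_iso (CP1 q) (tensor (CP1 q) (Lmod q n) (Om10 q))
                            (tensor (CP1 q) (Om10 q) (Lmod q n)) \<Psi>)"
proof
  fix n :: int
  interpret suq q by unfold_locales (rule assms(1))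
  show "(\<exists>\<Phi>. bimod_iso (CP1 q) (tensor (CP1 q) (Lmod q n) (Om01 q))
                            (tensor (CP1 q) (Om01 q) (Lmod q n)) \<Phi>) \<and>
    (\<exists>\<Psi>. bimod_iso (CP1 q) (tensor (CP1 q) (Lmod q n) (Om10 q))
                            (tensor (CP1 q) (Om10 q) (Lmod q n)) \<Psi>)"
    using swap_iso[OF Om01_tensorable] swap_iso[OF Om10_tensorable] by blast
qed

end
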